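(* For any tree $T$, there exists a non-empty elementary minor of $T$ with the same spectator floor as $T$ if and only if there exists an edge $e$ of $T$ such that contracting $e$ reduces the diameter of $T$.
   Context: All graphs are finite, have no loops, and may have multiple (parallel) edges. A minor of $H$ is any graph obtained from $H$ by a sequence of: deleting an isolated vertex, deleting an edge, contracting an edge that has no edge parallel to it; an elementary minor is one obtained by exactly one such operation. A unique shortest path is a shortest $u$–$v$ path $P$ such that every $u$–$v$ path with the same number of vertices is identical to $P$, where two paths with different edge sequences are different even if their vertex sequences agree; a single vertex is a unique shortest path. The parade number $\mathrm{usp}(G)$ is the largest number of vertices of a unique shortest path in $G$. The spectator number is $\mathrm{sp}(G)=|V(G)|-\mathrm{usp}(G)$. The spectator floor $\lfloor \mathrm{sp}\rfloor(G)$ is the minimum of $\mathrm{sp}(H)$ over all graphs $H$ of which $G$ is a minor. *)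

theory Defs
  imports Main
begin

text \<open>Vertices and edge identifiers are natural
numbers; every finite graph is isomorphic to one of this form. Each edge has a
2-element set of ends (no loops); parallel edges are allowed.\<close>

record mgraph =
  verts :: "nat set"
  edges :: "nat set"
  ends  :: "nat \<Rightarrow> nat set"

definition wf_graph :: "mgraph \<Rightarrow> bool" where
  "wf_graph G \<longleftrightarrow> finite (verts G) \<and> finite (edges G) \<and>
     (\<forall>e\<in>edges G. ends G e \<subseteq> verts G \<and> card (ends G e) = 2)"

definition is_path :: "mgraph \<Rightarrow> nat list \<Rightarrow> nat list \<Rightarrow> bool" where
  "is_path G vs es \<longleftrightarrow> vs \<noteq> [] \<and> distinct vs \<and> length vs = length es + 1 \<and>
     set vs \<subseteq> verts G \<and>
     (\<forall>i<length es. es ! i \<in> edges G \<and> ends G (es ! i) = {vs ! i, vs ! Suc i})"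

definition path_between :: "mgraph \<Rightarrow> nat \<Rightarrow> nat \<Rightarrow> nat list \<Rightarrow> nat list \<Rightarrow> bool" where
  "path_between G u v vs es \<longleftrightarrow> is_path G vs es \<and> hd vs = u \<and> last vs = v"

definition unique_shortest_path :: "mgraph \<Rightarrow> nat list \<Rightarrow> nat list \<Rightarrow> bool" where
  "unique_shortest_path G vs es \<longleftrightarrow> is_path G vs es \<and>
     (\<forall>vs' es'. path_between G (hd vs) (last vs) vs' es' \<longrightarrow> length vs \<le> length vs') \<and>
     (\<forall>vs' es'. path_between G (hd vs) (last vs) vs' es' \<and> length vs' = length vs
        \<longrightarrow> vs' = vs \<and> es' = es)"

definition usp :: "mgraph \<Rightarrow> nat" where
  "usp G = Sup {length vs | vs es. unique_shortest_path G vs es}"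

definition sp :: "mgraph \<Rightarrow> nat" where
  "sp G = card (verts G) - usp G"

definition del_vertex :: "mgraph \<Rightarrow> nat \<Rightarrow> mgraph" where
  "del_vertex G v = G\<lparr>verts := verts G - {v}\<rparr>"

definition del_edge :: "mgraph \<Rightarrow> nat \<Rightarrow> mgraph" where
  "del_edge G e = G\<lparr>edges := edges G - {e}\<rparr>"

definition contract :: "mgraph \<Rightarrow> nat \<Rightarrow> mgraph" where
  "contract G e = (let u = Min (ends G e); w = Max (ends G e) in
     \<lparr>verts = verts G - {w}, edges = edges G - {e},
      ends = (\<lambda>x. (\<lambda>y. if y = w then u else y) ` ends G x)\<rparr>)"

definition elem_minor :: "mgraph \<Rightarrow> mgraph \<Rightarrow> bool" where
  "elem_minor H G \<longleftrightarrow>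
     (\<exists>v\<in>verts G. (\<forall>e\<in>edges G. v \<notin> ends G e) \<and> H = del_vertex G v) \<or>
     (\<exists>e\<in>edges G. H = del_edge G e) \<or>
     (\<exists>e\<in>edges G. (\<forall>e'\<in>edges G. e' \<noteq> e \<longrightarrow> ends G e' \<noteq> ends G e) \<and> H = contract G e)"

definition graph_iso :: "mgraph \<Rightarrow> mgraph \<Rightarrow> bool" where
  "graph_iso G H \<longleftrightarrow> (\<exists>f g. bij_betw f (verts G) (verts H) \<and> bij_betw g (edges G) (edges H) \<and>
     (\<forall>e\<in>edges G. ends H (g e) = f ` ends G e))"

definition is_minor :: "mgraph \<Rightarrow> mgraph \<Rightarrow> bool" where
  "is_minor M G \<longleftrightarrow> (\<exists>M'. graph_iso M M' \<and> elem_minor\<^sup>*\<^sup>* M' G)"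

definition spfloor :: "mgraph \<Rightarrow> nat" where
  "spfloor G = (LEAST k. \<exists>H. wf_graph H \<and> is_minor G H \<and> sp H = k)"

definition connected_graph :: "mgraph \<Rightarrow> bool" where
  "connected_graph G \<longleftrightarrow> (\<forall>u\<in>verts G. \<forall>v\<in>verts G. \<exists>vs es. path_between G u v vs es)"

definition has_cycle :: "mgraph \<Rightarrow> bool" where
  "has_cycle G \<longleftrightarrow> (\<exists>vs es e. is_path G vs es \<and> 2 \<le> length vs \<and> e \<in> edges G \<and>
     e \<notin> set es \<and> ends G e = {hd vs, last vs})"

definition is_tree :: "mgraph \<Rightarrow> bool" where
  "is_tree G \<longleftrightarrow> wf_graph G \<and> verts G \<noteq> {} \<and> connected_graph G \<and> \<not> has_cycle G"

definition gdist :: "mgraph \<Rightarrow> nat \<Rightarrow> nat \<Rightarrow> nat" where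
  "gdist G u v = (LEAST k. \<exists>vs es. path_between G u v vs es \<and> length es = k)"

definition diameter :: "mgraph \<Rightarrow> nat" where
  "diameter G = Sup {gdist G u v | u v. u \<in> verts G \<and> v \<in> verts G}"

end

theory Submission
  imports Defs
begin

definition adj :: "mgraph \<Rightarrow> nat \<Rightarrow> nat \<Rightarrow> bool" where
  "adj G x y \<longleftrightarrow> x \<in> verts G \<and> y \<in> verts G \<and> (\<exists>e\<in>edges G. ends G e = {x,y})"

abbreviation reach :: "mgraph \<Rightarrow> nat \<Rightarrow> nat \<Rightarrow> bool" where
  "reach G \<equiv> (adj G)\<^sup>*\<^sup>*"

definition wdist :: "mgraph \<Rightarrow> nat \<Rightarrow> nat \<Rightarrow> nat" where
  "wdist G x y = (LEAST n. (adj G ^^ n) x y)"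

definition comp :: "mgraph \<Rightarrow> nat \<Rightarrow> nat set" where
  "comp G x = {z. reach G x z}"

lemma adj_sym: "adj G x y = adj G y x"
  unfolding adj_def by (auto simp: insert_commute)

lemma relpow_sym: "(adj G ^^ n) x y \<Longrightarrow> (adj G ^^ n) y x"
proof (induction n arbitrary: x y)
  case 0 then show ?case by simp
next
  case (Suc n)
  from Suc.prems obtain z where "(adj G ^^ n) x z" "adj G z y" by (rule relpowp_Suc_E)
  then show ?case using Suc.IH adj_sym by (metis relpowp_Suc_I2)
qed

lemma relpow_reach: "(adj G ^^ n) x y \<Longrightarrow> reach G x y"
  using rtranclp_power by metis

lemma reach_relpow: "reach G x y \<Longrightarrow> \<exists>n. (adj G ^^ n) x y"
  using rtranclp_power by metis

lemma reach_sym: "reach G x y \<Longrightarrow> reach G y x"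
  using relpow_sym rtranclp_power by metis

lemma reach_trans: "reach G x y \<Longrightarrow> reach G y z \<Longrightarrow> reach G x z"
  by (rule rtranclp_trans)

lemma adj_verts: "adj G x y \<Longrightarrow> x \<in> verts G \<and> y \<in> verts G"
  unfolding adj_def by auto

lemma reach_verts: "reach G x y \<Longrightarrow> x \<in> verts G \<Longrightarrow> y \<in> verts G"
  by (induction rule: rtranclp_induct) (auto dest: adj_verts)

lemma adj_reach: "adj G x y \<Longrightarrow> reach G x y" by auto

lemma wdist_le: "(adj G ^^ n) x y \<Longrightarrow> wdist G x y \<le> n"
  unfolding wdist_def by (rule Least_le)

lemma wdist_walk: "reach G x y \<Longrightarrow> (adj G ^^ wdist G x y) x y"
  unfolding wdist_def using reach_relpow by (metis LeastI_ex)

lemma relpow_split: "(R ^^ (m+n)) x y \<Longrightarrow> \<exists>z. (R^^m) x z \<and> (R^^n) z y"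
  by (simp add: relpowp_add OO_def)

lemma relpow_join: "(R^^m) x z \<Longrightarrow> (R^^n) z y \<Longrightarrow> (R^^(m+n)) x y"
  by (auto simp add: relpowp_add OO_def)

lemma relpow_mono:
  fixes P Q :: "'a \<Rightarrow> 'a \<Rightarrow> bool"
  assumes PQ: "\<And>a b. P a b \<Longrightarrow> Q a b"
  shows "(P^^n) x y \<Longrightarrow> (Q^^n) x y"
proof (induction n arbitrary: y)
  case 0 then show ?case by simp
next
  case (Suc n)
  from Suc.prems obtain z where "(P ^^ n) x z" "P z y" by (rule relpowp_Suc_E)
  then show ?case using Suc PQ by (metis relpowp_Suc_I)
qed

lemma wdist_tri: "reach G x y \<Longrightarrow> reach G y z \<Longrightarrow> wdist G x z \<le> wdist G x y + wdist G y z"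
  by (meson relpow_join wdist_le wdist_walk)

lemma comp_sub: "x \<in> verts G \<Longrightarrow> comp G x \<subseteq> verts G"
  unfolding comp_def using reach_verts by auto

lemma comp_eq: "reach G x y \<Longrightarrow> comp G x = comp G y"
  unfolding comp_def using reach_sym reach_trans by blast

lemma comp_disj: "\<not> reach G x y \<Longrightarrow> comp G x \<inter> comp G y = {}"
  unfolding comp_def using reach_sym reach_trans by blast

lemma comp_self: "x \<in> comp G x" unfolding comp_def by simp

lemma comp_card:
  assumes fin: "finite (verts G)" and x: "x \<in> verts G" and r: "reach G x y"
  shows "wdist G x y + 1 \<le> card (comp G x)"
proof -
  define k where "k = wdist G x y"
  have w: "(adj G ^^ k) x y" using wdist_walk[OF r] k_def by simp
  have "\<forall>i\<in>{0..k}. \<exists>z. (adj G ^^ i) x z \<and> (adj G ^^ (k-i)) z y"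
  proof
    fix i assume "i \<in> {0..k}"
    then have "k = i + (k - i)" by simp
    then show "\<exists>z. (adj G ^^ i) x z \<and> (adj G ^^ (k-i)) z y" using w relpow_split by metis
  qed
  then obtain f where f: "\<And>i. i \<in> {0..k} \<Longrightarrow> (adj G ^^ i) x (f i) \<and> (adj G ^^ (k-i)) (f i) y"
    by metis
  have dfi: "wdist G x (f i) = i" if i: "i \<in> {0..k}" for i
  proof -
    have le: "wdist G x (f i) \<le> i" using f[OF i] wdist_le by blast
    have "(adj G ^^ wdist G x (f i)) x (f i)" using f[OF i] relpow_reach wdist_walk by blast
    then have "(adj G ^^ (wdist G x (f i) + (k - i))) x y" using f[OF i] relpow_join by fast
    then have "k \<le> wdist G x (f i) + (k - i)" using wdist_le k_def by blast
    then show ?thesis using le i by simp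
  qed
  have inj: "inj_on f {0..k}" by (metis dfi inj_onI)
  have img: "f ` {0..k} \<subseteq> comp G x" unfolding comp_def using f relpow_reach by blast
  have "finite (comp G x)" using fin comp_sub[OF x] finite_subset by blast
  then have "card {0..k} \<le> card (comp G x)" using card_inj_on_le[OF inj img] by simp
  then show ?thesis using k_def by simp
qed


lemma path_walk:
  assumes p: "is_path G vs es" shows "i < length vs \<Longrightarrow> (adj G ^^ i) (hd vs) (vs!i)"
proof (induction i)
  case 0 then show ?case using p unfolding is_path_def by (simp add: hd_conv_nth)
next
  case (Suc i)
  have i: "i < length es" using Suc.prems p unfolding is_path_def by simp
  have e: "es!i \<in> edges G \<and> ends G (es!i) = {vs!i, vs!Suc i}" using p i unfolding is_path_def by blast
  have sv: "set vs \<subseteq> verts G" using p unfolding is_path_def by blast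
  have "vs!i \<in> verts G" "vs!Suc i \<in> verts G" using Suc.prems sv by (auto intro!: nth_mem)
  then have a: "adj G (vs!i) (vs!Suc i)" using e unfolding adj_def by blast
  have "(adj G ^^ i) (hd vs) (vs!i)" using Suc.IH Suc.prems by simp
  then show ?case using a by (rule relpowp_Suc_I)
qed

lemma path_walk_last: "is_path G vs es \<Longrightarrow> (adj G ^^ length es) (hd vs) (last vs)"
  using path_walk[of G vs es "length es"] unfolding is_path_def by (simp add: last_conv_nth)

lemma path_reach: "is_path G vs es \<Longrightarrow> v \<in> set vs \<Longrightarrow> reach G (hd vs) v"
  by (metis in_set_conv_nth path_walk relpow_reach)

lemma path_single: "x \<in> verts G \<Longrightarrow> is_path G [x] []"
  unfolding is_path_def by simp

lemma W2P:
  assumes x: "x \<in> verts G"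
  shows "(adj G ^^ n) x y \<Longrightarrow> \<exists>vs es. path_between G x y vs es \<and> length es \<le> n"
proof (induction n arbitrary: y)
  case 0
  then have "y = x" by simp
  then have "path_between G x y [x] [] \<and> length ([]::nat list) \<le> 0"
    using x path_single unfolding path_between_def by simp
  then show ?case by blast
next
  case (Suc n)
  from Suc.prems obtain z where z1: "(adj G ^^ n) x z" and z2: "adj G z y" by (rule relpowp_Suc_E)
  from Suc.IH[OF z1] obtain vs es where p: "path_between G x z vs es" and len: "length es \<le> n" by blast
  have ip: "is_path G vs es" and hx: "hd vs = x" and lz: "last vs = z" using p unfolding path_between_def by auto
  show ?case
  proof (cases "y \<in> set vs")
    case True
    then obtain j where j: "j < length vs" "vs!j = y" by (metis in_set_conv_nth)
    define vs' where "vs' = take (Suc j) vs"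
    define es' where "es' = take j es"
    have lj: "j \<le> length es" using j ip unfolding is_path_def by simp
    have "is_path G vs' es'"
      unfolding is_path_def
    proof (intro conjI allI impI)
      show "vs' \<noteq> []" using j vs'_def by (cases vs) auto
      show "distinct vs'" using ip vs'_def unfolding is_path_def by simp
      show "length vs' = length es' + 1" using j lj vs'_def es'_def by simp
      show "set vs' \<subseteq> verts G" using ip vs'_def unfolding is_path_def by (meson order_trans set_take_subset)
      fix i assume i: "i < length es'"
      then have ij: "i < j" using es'_def by simp
      have "es' ! i \<in> edges G \<and> ends G (es' ! i) = {vs' ! i, vs' ! Suc i}"
        using ip ij lj unfolding is_path_def vs'_def es'_def by simp
      then show "es' ! i \<in> edges G" by blast
      show "ends G (es' ! i) = {vs' ! i, vs' ! Suc i}" using \<open>es' ! i \<in> edges G \<and> ends G (es' ! i) = {vs' ! i, vs' ! Suc i}\<close> by blast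
    qed
    moreover have "hd vs' = x"
    proof -
      have "vs \<noteq> []" using j by auto
      then show ?thesis using hx vs'_def by simp
    qed
    moreover
    moreover have "last vs' = y" using j vs'_def by (simp add: take_Suc_conv_app_nth)
    moreover have "length es' \<le> Suc n" using es'_def len by simp
    ultimately show ?thesis unfolding path_between_def by blast
  next
    case False
    from z2 obtain e where e: "e \<in> edges G" "ends G e = {z,y}" and yv: "y \<in> verts G"
      unfolding adj_def by blast
    define vs' where "vs' = vs @ [y]"
    define es' where "es' = es @ [e]"
    have lv: "length vs = length es + 1" using ip unfolding is_path_def by simp
    have lastv: "vs ! length es = z" using lz lv ip unfolding is_path_def by (simp add: last_conv_nth)
    have "is_path G vs' es'"
      unfolding is_path_def
    proof (intro conjI allI impI)
      show "vs' \<noteq> []" using vs'_def by simp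
      show "distinct vs'" using ip False vs'_def unfolding is_path_def by simp
      show "length vs' = length es' + 1" using lv vs'_def es'_def by simp
      show "set vs' \<subseteq> verts G" using ip yv vs'_def unfolding is_path_def by simp
      fix i assume i: "i < length es'"
      have H: "es' ! i \<in> edges G \<and> ends G (es' ! i) = {vs' ! i, vs' ! Suc i}"
      proof (cases "i < length es")
        case True
        then show ?thesis using ip lv i unfolding is_path_def vs'_def es'_def by (simp add: nth_append)
      next
        case False
        then have "i = length es" using i es'_def by simp
        then show ?thesis using e lastv lv unfolding vs'_def es'_def by (simp add: nth_append)
      qed
      then show "es' ! i \<in> edges G" by blast
      show "ends G (es' ! i) = {vs' ! i, vs' ! Suc i}" using H by blast
    qed
    moreover have "hd vs' = x" using hx ip vs'_def unfolding is_path_def by simp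
    moreover have "last vs' = y" using vs'_def by simp
    moreover have "length es' \<le> Suc n" using es'_def len by simp
    ultimately show ?thesis unfolding path_between_def by blast
  qed
qed

lemma gdist_le_path: "path_between G x y vs es \<Longrightarrow> gdist G x y \<le> length es"
  unfolding gdist_def by (rule Least_le) blast

lemma gdist_attained: "path_between G x y vs es \<Longrightarrow>
   \<exists>vs' es'. path_between G x y vs' es' \<and> length es' = gdist G x y"
  unfolding gdist_def by (rule LeastI_ex) blast

lemma gdist_le_walk: "x \<in> verts G \<Longrightarrow> (adj G ^^ n) x y \<Longrightarrow> gdist G x y \<le> n"
  using W2P gdist_le_path by (meson le_trans)

lemma gdist_walk: "path_between G x y vs es \<Longrightarrow> (adj G ^^ gdist G x y) x y"
  using gdist_attained path_walk_last unfolding path_between_def by metis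

lemma reach_path: "x \<in> verts G \<Longrightarrow> reach G x y \<Longrightarrow> \<exists>vs es. path_between G x y vs es"
  using W2P reach_relpow by metis

lemma diam_set: "{gdist G u v | u v. u \<in> verts G \<and> v \<in> verts G} = (\<lambda>(u,v). gdist G u v) ` (verts G \<times> verts G)"
  by auto

lemma diam_ge: "finite (verts G) \<Longrightarrow> u \<in> verts G \<Longrightarrow> v \<in> verts G \<Longrightarrow> gdist G u v \<le> diameter G"
  unfolding diameter_def diam_set by (rule le_cSup_finite) auto

lemma diam_le: "verts G \<noteq> {} \<Longrightarrow> (\<And>u v. u \<in> verts G \<Longrightarrow> v \<in> verts G \<Longrightarrow> gdist G u v \<le> B) \<Longrightarrow> diameter G \<le> B"
  unfolding diameter_def diam_set by (rule cSup_least) auto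

lemma diam_attained: "finite (verts G) \<Longrightarrow> verts G \<noteq> {} \<Longrightarrow> \<exists>u\<in>verts G. \<exists>v\<in>verts G. diameter G = gdist G u v"
proof -
  assume f: "finite (verts G)" and ne: "verts G \<noteq> {}"
  let ?S = "(\<lambda>(u,v). gdist G u v) ` (verts G \<times> verts G)"
  have "finite ?S" "?S \<noteq> {}" using f ne by auto
  then have "Sup ?S \<in> ?S" using cSup_eq_Max Max_in by metis
  then show ?thesis unfolding diameter_def diam_set by auto
qed

lemma usp_path_len: "finite (verts G) \<Longrightarrow> unique_shortest_path G vs es \<Longrightarrow> length vs \<le> card (verts G)"
  unfolding unique_shortest_path_def is_path_def by (metis card_mono distinct_card)

lemma usp_set_fin: "finite (verts G) \<Longrightarrow> finite {length vs | vs es. unique_shortest_path G vs es}"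
  by (rule finite_subset[of _ "{..card (verts G)}"]) (auto dest: usp_path_len)

lemma usp_le_card: assumes f: "finite (verts G)" shows "usp G \<le> card (verts G)"
proof -
  let ?S = "{length vs | vs es. unique_shortest_path G vs es}"
  have "\<And>k. k \<in> ?S \<Longrightarrow> k \<le> card (verts G)" using usp_path_len[OF f] by blast
  then show ?thesis unfolding usp_def Sup_nat_def using usp_set_fin[OF f] by (simp add: Max.boundedI)
qed

lemma usp_ge: assumes f: "finite (verts G)" and u: "unique_shortest_path G vs es" shows "length vs \<le> usp G"
proof -
  have "length vs \<in> {length vs | vs es. unique_shortest_path G vs es}" using u by blast
  then show ?thesis unfolding usp_def by (rule le_cSup_finite[OF usp_set_fin[OF f]])
qed

lemma distinct_hd_last: "distinct xs \<Longrightarrow> 2 \<le> length xs \<Longrightarrow> hd xs \<noteq> last xs"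
  by (cases xs) (auto simp: last_conv_nth)

lemma path_same_ends: assumes p: "is_path G vs es" and h: "hd vs = last vs" shows "vs = [hd vs] \<and> es = []"
proof -
  have d: "distinct vs" "vs \<noteq> []" "length vs = length es + 1" using p unfolding is_path_def by auto
  have "\<not> 2 \<le> length vs" using distinct_hd_last d(1) h by blast
  moreover have "length vs \<noteq> 0" using d(2) by simp
  ultimately have "length vs = 1" by arith
  then show ?thesis using d(3) by (cases vs) auto
qed

lemma usp_single: assumes x: "x \<in> verts G" shows "unique_shortest_path G [x] []"
proof -
  have A: "is_path G [x] []" by (rule path_single[OF x])
  have B: "\<forall>vs' es'. path_between G (hd [x]) (last [x]) vs' es' \<longrightarrow> vs' = [x] \<and> es' = []"
  proof (intro allI impI)
    fix vs' es' assume "path_between G (hd [x]) (last [x]) vs' es'"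
    then have "is_path G vs' es'" "hd vs' = x" "last vs' = x" unfolding path_between_def by auto
    then show "vs' = [x] \<and> es' = []" using path_same_ends by metis
  qed
  show ?thesis unfolding unique_shortest_path_def using A B by auto
qed

lemma usp_attained: assumes f: "finite (verts G)" and x: "x \<in> verts G"
  shows "\<exists>vs es. unique_shortest_path G vs es \<and> usp G = length vs"
proof -
  let ?S = "{length vs | vs es. unique_shortest_path G vs es}"
  have fS: "finite ?S" using usp_set_fin f by blast
  have "length [x] \<in> ?S" using usp_single[OF x] by (intro CollectI exI conjI) (rule refl)
  then have "?S \<noteq> {}" by blast
  then have "Max ?S \<in> ?S" using fS by (rule Max_in[rotated])
  then obtain vs es where "Max ?S = length vs" "unique_shortest_path G vs es" by blast
  moreover have "usp G = Max ?S" unfolding usp_def using fS \<open>?S \<noteq> {}\<close> by (rule cSup_eq_Max)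
  ultimately show ?thesis by metis
qed


definition BP :: "mgraph \<Rightarrow> bool" where
  "BP G \<longleftrightarrow> (\<forall>e\<in>edges G. \<forall>a b. ends G e = {a,b} \<longrightarrow> \<not> reach (del_edge G e) a b)"

lemma del_edge_simps[simp]: "verts (del_edge G e) = verts G" "edges (del_edge G e) = edges G - {e}"
  "ends (del_edge G e) = ends G"
  unfolding del_edge_def by simp_all

lemma adj_del_edge: "adj (del_edge G e) x y \<Longrightarrow> adj G x y"
  unfolding adj_def by auto

lemma adj_del_edge2: "adj G x y \<Longrightarrow> \<not> adj (del_edge G e) x y \<Longrightarrow> ends G e = {x,y}"
  unfolding adj_def by auto

lemma path_del_edge: "is_path G vs es \<Longrightarrow> e \<notin> set es \<Longrightarrow> is_path (del_edge G e) vs es"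
  unfolding is_path_def by (auto simp: in_set_conv_nth)

lemma path_del_edge2: "is_path (del_edge G e) vs es \<Longrightarrow> is_path G vs es \<and> e \<notin> set es"
  unfolding is_path_def by (auto simp: in_set_conv_nth)

lemma path_tail:
  assumes "is_path G (x#vs) (e#es)"
  shows "is_path G vs es \<and> e \<in> edges G \<and> ends G e = {x, hd vs} \<and> x \<notin> set vs \<and> vs \<noteq> []"
proof -
  have vs: "vs \<noteq> []" using assms unfolding is_path_def by auto
  have "is_path G vs es" using assms unfolding is_path_def by auto
  moreover have "e \<in> edges G \<and> ends G e = {x, hd vs}"
    using assms vs unfolding is_path_def by (auto simp: hd_conv_nth)
  moreover have "x \<notin> set vs" using assms unfolding is_path_def by auto
  ultimately show ?thesis using vs by blast
qed

lemma path_avoid: assumes p: "is_path G vs es" and x: "x \<notin> set vs" and xe: "x \<in> ends G e"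
  shows "e \<notin> set es"
proof
  assume "e \<in> set es"
  then obtain i where i: "i < length es" "es!i = e" by (auto simp: in_set_conv_nth)
  then have "ends G e = {vs!i, vs!Suc i}" using p unfolding is_path_def by auto
  moreover have "i < length vs" "Suc i < length vs" using i p unfolding is_path_def by auto
  ultimately show False using x xe nth_mem by fastforce
qed

lemma path_reach_last: "is_path G vs es \<Longrightarrow> reach G (hd vs) (last vs)"
  using path_walk_last relpow_reach by metis

lemma path_unique:
  assumes wf: "wf_graph G" and bp: "BP G"
  shows "is_path G vs es \<Longrightarrow> is_path G vs' es' \<Longrightarrow> hd vs = hd vs' \<Longrightarrow> last vs = last vs'
    \<Longrightarrow> vs = vs' \<and> es = es'"
proof (induction vs arbitrary: es vs' es')
  case Nil then show ?case unfolding is_path_def by simp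
next
  case (Cons x vs1)
  show ?case
  proof (cases es)
    case Nil
    then have "vs1 = []" using Cons.prems(1) unfolding is_path_def by simp
    then have "hd vs' = last vs'" using Cons.prems by simp
    then show ?thesis using path_same_ends[OF Cons.prems(2)] Cons.prems \<open>vs1 = []\<close> Nil by simp
  next
    case (Cons e1 es1)
    note P = path_tail[OF Cons.prems(1)[unfolded Cons]]
    have ne': "vs' \<noteq> []" using Cons.prems(2) unfolding is_path_def by simp
    then obtain x' vs1' where vs': "vs' = x' # vs1'" by (cases vs') auto
    have xx: "x' = x" using Cons.prems(3) vs' by simp
    have lastne: "last (x # vs1) \<noteq> x" using P by (metis last_ConsR last_in_set)
    have es'ne: "es' \<noteq> []"
    proof
      assume "es' = []"
      then have "vs1' = []" using Cons.prems(2) vs' unfolding is_path_def by simp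
      then show False using Cons.prems(4) vs' xx lastne by simp
    qed
    then obtain f1 es1' where es': "es' = f1 # es1'" by (cases es') auto
    note P' = path_tail[OF Cons.prems(2)[unfolded vs' es' xx]]
    have ll: "last vs1' = last vs1" using Cons.prems(4) vs' P P' by simp
    have ef: "e1 = f1"
    proof (rule ccontr)
      assume ne: "e1 \<noteq> f1"
      let ?H = "del_edge G e1"
      have x1: "x \<in> ends G e1" using P by simp
      have f1: "f1 \<in> edges G" "ends G f1 = {x, hd vs1'}" using P' by blast+
      then have "ends G f1 \<subseteq> verts G" using wf unfolding wf_graph_def by blast
      then have "x \<in> verts ?H" "hd vs1' \<in> verts ?H" using f1 by auto
      moreover have "f1 \<in> edges ?H" using f1 ne by simp
      ultimately have a1: "adj ?H x (hd vs1')" using f1 unfolding adj_def by auto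
      have "e1 \<notin> set es1'" using path_avoid[of G vs1' es1' x e1] P' x1 by blast
      then have "is_path ?H vs1' es1'" using path_del_edge P' by blast
      then have r1: "reach ?H (hd vs1') (last vs1')" by (rule path_reach_last)
      have "e1 \<notin> set es1" using path_avoid[of G vs1 es1 x e1] P x1 by blast
      then have "is_path ?H vs1 es1" using path_del_edge P by blast
      then have r2: "reach ?H (hd vs1) (last vs1)" by (rule path_reach_last)
      have "reach ?H x (last vs1)" using a1 r1 ll by (metis adj_reach reach_trans)
      then have "reach ?H x (hd vs1)" using r2 reach_sym reach_trans by metis
      then show False using bp P unfolding BP_def by blast
    qed
    have hh: "hd vs1' = hd vs1"
    proof -
      have "{x, hd vs1'} = {x, hd vs1}" using P P' ef by simp
      moreover have "hd vs1' \<noteq> x" using P' by (metis hd_in_set)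
      ultimately show ?thesis by (auto simp: doubleton_eq_iff)
    qed
    have i1: "is_path G vs1 es1" using P by blast
    have i2: "is_path G vs1' es1'" using P' by blast
    have "vs1 = vs1' \<and> es1 = es1'" using Cons.IH[OF i1 i2 hh[symmetric] ll[symmetric]] .
    then show ?thesis using vs' es' xx ef Cons by simp
  qed
qed

lemma tree_BP: assumes wf: "wf_graph G" and nc: "\<not> has_cycle G" shows "BP G"
  unfolding BP_def
proof (intro ballI allI impI notI)
  fix e a b assume e: "e \<in> edges G" and ab: "ends G e = {a,b}" and r: "reach (del_edge G e) a b"
  have card: "card {a,b} = 2" "{a,b} \<subseteq> verts G" using wf e ab unfolding wf_graph_def by auto
  then have anb: "a \<noteq> b" by auto
  have "a \<in> verts (del_edge G e)" using card by simp
  then obtain vs es where p: "path_between (del_edge G e) a b vs es" using reach_path r by blast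
  then have ip: "is_path G vs es" "e \<notin> set es" "hd vs = a" "last vs = b"
    using path_del_edge2 unfolding path_between_def by auto
  have "2 \<le> length vs"
  proof (rule ccontr)
    assume "\<not> 2 \<le> length vs"
    then have "length vs \<le> 1" by simp
    moreover have "vs \<noteq> []" using ip unfolding is_path_def by simp
    ultimately obtain z where "vs = [z]" by (cases vs) auto
    then show False using ip anb by simp
  qed
  then have "has_cycle G" unfolding has_cycle_def using ip e ab by blast
  then show False using nc by simp
qed

lemma BP_noparallel: "wf_graph G \<Longrightarrow> BP G \<Longrightarrow> e \<in> edges G \<Longrightarrow> e' \<in> edges G \<Longrightarrow> e' \<noteq> e \<Longrightarrow> ends G e' \<noteq> ends G e"
proof
  assume wf: "wf_graph G" and bp: "BP G" and e: "e \<in> edges G" and e': "e' \<in> edges G" "e' \<noteq> e"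
    and eq: "ends G e' = ends G e"
  obtain a b where ab: "ends G e = {a,b}" using wf e unfolding wf_graph_def by (metis card_2_iff)
  have "{a,b} \<subseteq> verts G" using wf e ab unfolding wf_graph_def by auto
  then have "adj (del_edge G e) a b" using e' eq ab unfolding adj_def by auto
  then show False using bp e ab unfolding BP_def by blast
qed

lemma wf_del_edge: "wf_graph G \<Longrightarrow> wf_graph (del_edge G e)"
  unfolding wf_graph_def by auto

lemma wf_del_vertex: "wf_graph G \<Longrightarrow> (\<forall>e\<in>edges G. v \<notin> ends G e) \<Longrightarrow> wf_graph (del_vertex G v)"
  unfolding wf_graph_def del_vertex_def by auto


definition cu :: "mgraph \<Rightarrow> nat \<Rightarrow> nat" where "cu G e = Min (ends G e)"
definition cw :: "mgraph \<Rightarrow> nat \<Rightarrow> nat" where "cw G e = Max (ends G e)"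
definition sig :: "mgraph \<Rightarrow> nat \<Rightarrow> nat \<Rightarrow> nat" where
  "sig G e y = (if y = cw G e then cu G e else y)"

lemma contract_simps[simp]: "verts (contract G e) = verts G - {cw G e}"
  "edges (contract G e) = edges G - {e}"
  "ends (contract G e) x = sig G e ` ends G x"
  unfolding contract_def Let_def cu_def cw_def sig_def by simp_all

lemma ends_uw: assumes "wf_graph G" "e \<in> edges G"
  shows "ends G e = {cu G e, cw G e} \<and> cu G e \<noteq> cw G e \<and> cu G e \<in> verts G \<and> cw G e \<in> verts G"
proof -
  have c: "card (ends G e) = 2" and s: "ends G e \<subseteq> verts G" using assms unfolding wf_graph_def by auto
  then obtain a b where ab: "ends G e = {a,b}" "a \<noteq> b" by (metis card_2_iff)
  have "cu G e = min a b" "cw G e = max a b" unfolding cu_def cw_def ab by simp_all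
  then show ?thesis using ab s by (auto simp: min_def max_def)
qed

lemma adj_uw: "wf_graph G \<Longrightarrow> e \<in> edges G \<Longrightarrow> adj G (cu G e) (cw G e) \<and> adj G (cw G e) (cu G e)"
  using ends_uw[of G e] unfolding adj_def by (auto simp: insert_commute)

lemma sig_verts: "wf_graph G \<Longrightarrow> e \<in> edges G \<Longrightarrow> y \<in> verts G \<Longrightarrow> sig G e y \<in> verts (contract G e)"
  using ends_uw[of G e] unfolding sig_def by auto

lemma sig_cases: "sig G e y = y \<and> y \<noteq> cw G e \<or> y = cw G e \<and> sig G e y = cu G e"
  unfolding sig_def by auto

lemma wf_contract:
  assumes wf: "wf_graph G" and e: "e \<in> edges G" and np: "\<forall>e'\<in>edges G. e' \<noteq> e \<longrightarrow> ends G e' \<noteq> ends G e"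
  shows "wf_graph (contract G e)"
  unfolding wf_graph_def
proof (intro conjI ballI)
  show "finite (verts (contract G e))" "finite (edges (contract G e))" using wf unfolding wf_graph_def by auto
  fix e' assume e': "e' \<in> edges (contract G e)"
  then have e'G: "e' \<in> edges G" "e' \<noteq> e" by auto
  have c: "card (ends G e') = 2" and s: "ends G e' \<subseteq> verts G" using wf e'G unfolding wf_graph_def by auto
  then obtain p q where pq: "ends G e' = {p,q}" "p \<noteq> q" by (metis card_2_iff)
  note U = ends_uw[OF wf e]
  show "ends (contract G e) e' \<subseteq> verts (contract G e)"
    using s pq sig_verts[OF wf e] by auto
  have "sig G e p \<noteq> sig G e q"
  proof
    assume eq: "sig G e p = sig G e q"
    then have "{p,q} = {cu G e, cw G e}" using pq(2) U unfolding sig_def by (auto split: if_splits)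
    then show False using np e'G pq U by metis
  qed
  then show "card (ends (contract G e) e') = 2" using pq by simp
qed

lemma C1:
  assumes wf: "wf_graph G" and e: "e \<in> edges G" and a: "adj (contract G e) x y"
  shows "adj G x y \<or> (x = cu G e \<and> adj G (cw G e) y) \<or> (y = cu G e \<and> adj G x (cw G e))"
proof -
  note U = ends_uw[OF wf e]
  from a obtain e' where e': "e' \<in> edges G" "e' \<noteq> e" "sig G e ` ends G e' = {x,y}"
    and xy: "x \<in> verts G" "x \<noteq> cw G e" "y \<in> verts G" "y \<noteq> cw G e"
    unfolding adj_def by auto
  have c: "card (ends G e') = 2" and s: "ends G e' \<subseteq> verts G" using wf e' unfolding wf_graph_def by auto
  then obtain p q where pq: "ends G e' = {p,q}" "p \<noteq> q" by (metis card_2_iff)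
  have pqv: "p \<in> verts G" "q \<in> verts G" using s pq by auto
  have im: "{sig G e p, sig G e q} = {x,y}" using e' pq by simp
  show ?thesis
  proof (cases "p = cw G e")
    case True
    then have "q \<noteq> cw G e" using pq by simp
    then have "{cu G e, q} = {x,y}" using im True unfolding sig_def by simp
    then have "(x = cu G e \<and> y = q) \<or> (y = cu G e \<and> x = q)" by (auto simp: doubleton_eq_iff)
    moreover have "adj G (cw G e) q" "adj G q (cw G e)" using e' pq True pqv unfolding adj_def
      by (auto simp: insert_commute)
    ultimately show ?thesis by blast
  next
    case False
    show ?thesis
    proof (cases "q = cw G e")
      case True
      then have "{p, cu G e} = {x,y}" using im False unfolding sig_def by simp
      then have "(x = cu G e \<and> y = p) \<or> (y = cu G e \<and> x = p)" by (auto simp: doubleton_eq_iff)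
      moreover have "adj G (cw G e) p" "adj G p (cw G e)" using e' pq True pqv unfolding adj_def
        by (auto simp: insert_commute)
      ultimately show ?thesis by blast
    next
      case False2: False
      then have "{p,q} = {x,y}" using im False unfolding sig_def by simp
      then have "adj G x y" using e' pq xy unfolding adj_def by auto
      then show ?thesis by blast
    qed
  qed
qed

lemma C2:
  assumes wf: "wf_graph G" and e: "e \<in> edges G" and a: "adj G x y"
  shows "adj (contract G e) (sig G e x) (sig G e y) \<or> sig G e x = sig G e y"
proof -
  from a obtain e' where e': "e' \<in> edges G" "ends G e' = {x,y}" and xy: "x \<in> verts G" "y \<in> verts G"
    unfolding adj_def by auto
  show ?thesis
  proof (cases "e' = e")
    case True
    then have "{x,y} = {cu G e, cw G e}" using ends_uw[OF wf e] e' by simp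
    then have "sig G e x = sig G e y" unfolding sig_def by (auto simp: doubleton_eq_iff)
    then show ?thesis by blast
  next
    case False
    have "e' \<in> edges (contract G e)" "ends (contract G e) e' = {sig G e x, sig G e y}" using e' False by auto
    then have "adj (contract G e) (sig G e x) (sig G e y)"
      using sig_verts[OF wf e] xy unfolding adj_def by blast
    then show ?thesis by blast
  qed
qed

lemma contract_walk_down:
  assumes wf: "wf_graph G" and e: "e \<in> edges G"
  shows "(adj G ^^ n) x y \<Longrightarrow> \<exists>m\<le>n. (adj (contract G e) ^^ m) (sig G e x) (sig G e y)"
proof (induction n arbitrary: y)
  case 0 then show ?case by simp
next
  case (Suc n)
  from Suc.prems obtain z where z: "(adj G ^^ n) x z" "adj G z y" by (rule relpowp_Suc_E)
  from Suc.IH[OF z(1)] obtain m where m: "m \<le> n" "(adj (contract G e) ^^ m) (sig G e x) (sig G e z)" by blast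
  from C2[OF wf e z(2)] show ?case
  proof
    assume "adj (contract G e) (sig G e z) (sig G e y)"
    then have "(adj (contract G e) ^^ Suc m) (sig G e x) (sig G e y)" using m(2) by (rule relpowp_Suc_I[rotated])
    then show ?thesis using m(1) by (intro exI[of _ "Suc m"]) simp
  next
    assume "sig G e z = sig G e y"
    then show ?thesis using m by (intro exI[of _ m]) simp
  qed
qed

lemma contract_reach_down: "wf_graph G \<Longrightarrow> e \<in> edges G \<Longrightarrow> reach G x y \<Longrightarrow> reach (contract G e) (sig G e x) (sig G e y)"
  using contract_walk_down reach_relpow relpow_reach by metis

lemma contract_adj_up: "wf_graph G \<Longrightarrow> e \<in> edges G \<Longrightarrow> adj (contract G e) x y \<Longrightarrow> reach G x y"
  using C1 adj_uw by (metis adj_reach reach_trans)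

lemma contract_reach_up:
  assumes wf: "wf_graph G" and e: "e \<in> edges G"
  shows "reach (contract G e) x y \<Longrightarrow> reach G x y"
proof (induction rule: rtranclp_induct)
  case base then show ?case by simp
next
  case (step y z) then show ?case using contract_adj_up[OF wf e] reach_trans by metis
qed

lemma contract_lift:
  assumes wf: "wf_graph G" and e: "e \<in> edges G"
  shows "(adj (contract G e) ^^ n) x y \<Longrightarrow> x0 \<in> verts G \<Longrightarrow> sig G e x0 = x \<Longrightarrow>
    (\<exists>m\<le>n. (adj G ^^ m) x0 y) \<or>
    (\<exists>n1 n2 z1 z2. z1 \<in> {cu G e, cw G e} \<and> z2 \<in> {cu G e, cw G e} \<and>
        (adj G ^^ n1) x0 z1 \<and> (adj G ^^ n2) z2 y \<and> n1 + n2 \<le> n)"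
proof (induction n arbitrary: y)
  case 0
  then have "y = sig G e x0" by simp
  then show ?case
  proof (cases "x0 = cw G e")
    case True
    then have "(adj G ^^ 0) x0 (cw G e)" "(adj G ^^ 0) (cu G e) y" using \<open>y = sig G e x0\<close> unfolding sig_def by auto
    then show ?thesis by blast
  next
    case False
    then have "(adj G ^^ 0) x0 y" using \<open>y = sig G e x0\<close> unfolding sig_def by auto
    then show ?thesis by blast
  qed
next
  case (Suc n)
  let ?u = "cu G e" and ?w = "cw G e"
  from Suc.prems(1) obtain z where z: "(adj (contract G e) ^^ n) x z" "adj (contract G e) z y" by (rule relpowp_Suc_E)
  have C: "adj G z y \<or> (z = ?u \<and> adj G ?w y) \<or> (y = ?u \<and> adj G z ?w)" by (rule C1[OF wf e z(2)])
  have uw: "adj G ?u ?w" "adj G ?w ?u" using adj_uw[OF wf e] by auto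
  from Suc.IH[OF z(1) Suc.prems(2,3)] show ?case
  proof
    assume "\<exists>m\<le>n. (adj G ^^ m) x0 z"
    then obtain m where m: "m \<le> n" "(adj G ^^ m) x0 z" by blast
    from C show ?thesis
    proof (elim disjE conjE)
      assume "adj G z y"
      then have "(adj G ^^ Suc m) x0 y" using m(2) by (rule relpowp_Suc_I[rotated])
      then show ?thesis using m(1) by (intro disjI1 exI[of _ "Suc m"]) simp
    next
      assume zu: "z = ?u" and wy: "adj G ?w y"
      have "(adj G ^^ 1) ?w y" using wy unfolding relpowp_1 .
      then show ?thesis using m zu by (intro disjI2 exI[of _ m] exI[of _ 1] exI[of _ ?u] exI[of _ ?w]) simp
    next
      assume yu: "y = ?u" and zw: "adj G z ?w"
      have "(adj G ^^ Suc m) x0 ?w" using m(2) zw by (rule relpowp_Suc_I)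
      then show ?thesis using m yu by (intro disjI2 exI[of _ "Suc m"] exI[of _ 0] exI[of _ ?w] exI[of _ ?u]) simp
    qed
  next
    assume "\<exists>n1 n2 z1 z2. z1 \<in> {?u, ?w} \<and> z2 \<in> {?u, ?w} \<and> (adj G ^^ n1) x0 z1 \<and> (adj G ^^ n2) z2 z \<and> n1 + n2 \<le> n"
    then obtain n1 n2 z1 z2 where B: "z1 \<in> {?u, ?w}" "z2 \<in> {?u, ?w}" "(adj G ^^ n1) x0 z1"
      "(adj G ^^ n2) z2 z" "n1 + n2 \<le> n" by blast
    from C show ?thesis
    proof (elim disjE conjE)
      assume "adj G z y"
      then have "(adj G ^^ Suc n2) z2 y" using B(4) by (rule relpowp_Suc_I[rotated])
      then show ?thesis using B by (intro disjI2 exI[of _ n1] exI[of _ "Suc n2"] exI[of _ z1] exI[of _ z2]) simp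
    next
      assume zu: "z = ?u" and wy: "adj G ?w y"
      have "(adj G ^^ 1) ?w y" using wy unfolding relpowp_1 .
      then show ?thesis using B by (intro disjI2 exI[of _ n1] exI[of _ 1] exI[of _ z1] exI[of _ ?w]) simp
    next
      assume yu: "y = ?u"
      have "(adj G ^^ 0) ?u y" using yu by simp
      then show ?thesis using B by (intro disjI2 exI[of _ n1] exI[of _ 0] exI[of _ z1] exI[of _ ?u]) simp
    qed
  qed
qed

lemma del_edge_contract: "e0 \<noteq> e \<Longrightarrow> del_edge (contract G e) e0 = contract (del_edge G e0) e"
proof -
  assume "e0 \<noteq> e"
  have a: "ends (del_edge G e0) = ends G" by simp
  show ?thesis unfolding contract_def Let_def a
    by (simp add: del_edge_def Diff_insert2[symmetric] insert_commute)
qed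

lemma sig_del_edge[simp]: "sig (del_edge G e0) e = sig G e"
  "cu (del_edge G e0) e = cu G e" "cw (del_edge G e0) e = cw G e"
  unfolding sig_def cu_def cw_def del_edge_simps(3) by simp_all

lemma reach_sig: "wf_graph G \<Longrightarrow> e \<in> edges G \<Longrightarrow> reach G a (sig G e a)"
  using adj_uw[of G e] unfolding sig_def by auto

lemma BP_contract:
  assumes wf: "wf_graph G" and bp: "BP G" and e: "e \<in> edges G"
  shows "BP (contract G e)"
  unfolding BP_def
proof (intro ballI allI impI notI)
  fix e0 a' b' assume e0: "e0 \<in> edges (contract G e)" and ab': "ends (contract G e) e0 = {a',b'}"
    and r: "reach (del_edge (contract G e) e0) a' b'"
  have e0G: "e0 \<in> edges G" "e0 \<noteq> e" using e0 by auto
  let ?G0 = "del_edge G e0"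
  have wf0: "wf_graph ?G0" using wf_del_edge[OF wf] .
  have e0': "e \<in> edges ?G0" using e e0G by simp
  have r0: "reach ?G0 a' b'" using r del_edge_contract[OF e0G(2)] contract_reach_up[OF wf0 e0'] by metis
  obtain a b where ab: "ends G e0 = {a,b}" using wf e0G unfolding wf_graph_def by (metis card_2_iff)
  have "{sig G e a, sig G e b} = {a',b'}" using ab ab' by simp
  then have "reach ?G0 (sig G e a) (sig G e b)" using r0 reach_sym by (auto simp: doubleton_eq_iff)
  moreover have "reach ?G0 a (sig G e a)" "reach ?G0 b (sig G e b)" using reach_sig[OF wf0 e0'] by auto
  ultimately have "reach ?G0 a b" using reach_sym reach_trans by metis
  then show False using bp e0G ab unfolding BP_def by blast
qed


definition J :: "nat \<Rightarrow> nat \<Rightarrow> nat \<Rightarrow> mgraph \<Rightarrow> bool" where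
  "J N D v0 G \<longleftrightarrow> v0 \<in> verts G \<and>
     (\<forall>s t. reach G v0 s \<longrightarrow> reach G s t \<longrightarrow> wdist G s t + N \<le> card (comp G v0) + D)"

lemma wdist_sym: "wdist G x y = wdist G y x"
proof -
  have "(\<lambda>n. (adj G ^^ n) x y) = (\<lambda>n. (adj G ^^ n) y x)" using relpow_sym by blast
  then show ?thesis unfolding wdist_def by simp
qed

lemma wdist_0: "wdist G x x = 0"
  using wdist_le[of 0 G x x] by simp

lemma reach_del_edge: "reach (del_edge G e) x y \<Longrightarrow> reach G x y"
proof (induction rule: rtranclp_induct)
  case base then show ?case by simp
next
  case (step y z) then show ?case using adj_del_edge by (metis rtranclp.rtrancl_into_rtrancl)
qed

lemma comp_fin: "finite (verts G) \<Longrightarrow> x \<in> verts G \<Longrightarrow> finite (comp G x)"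
  using comp_sub finite_subset by blast

lemma del_decomp:
  "(adj G ^^ n) x y \<Longrightarrow> (\<exists>m\<le>n. (adj (del_edge G e) ^^ m) x y) \<or>
    (\<exists>n1 n2 p q. {p,q} = ends G e \<and> (adj (del_edge G e) ^^ n1) x p \<and> (adj (del_edge G e) ^^ n2) q y \<and> n1 + 1 + n2 \<le> n)"
proof (induction n arbitrary: y)
  case 0 then show ?case by auto
next
  case (Suc n)
  let ?H = "del_edge G e"
  from Suc.prems obtain z where z: "(adj G ^^ n) x z" "adj G z y" by (rule relpowp_Suc_E)
  have C: "adj ?H z y \<or> ends G e = {z,y}" using adj_del_edge2 z(2) by blast
  from Suc.IH[OF z(1)] show ?case
  proof
    assume "\<exists>m\<le>n. (adj ?H ^^ m) x z"
    then obtain m where m: "m \<le> n" "(adj ?H ^^ m) x z" by blast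
    from C show ?thesis
    proof
      assume "adj ?H z y"
      then have "(adj ?H ^^ Suc m) x y" using m(2) by (rule relpowp_Suc_I[rotated])
      then show ?thesis using m(1) by (intro disjI1 exI[of _ "Suc m"]) simp
    next
      assume "ends G e = {z,y}"
      moreover have "(adj ?H ^^ 0) y y" by simp
      ultimately show ?thesis using m by (intro disjI2 exI[of _ m] exI[of _ 0] exI[of _ z] exI[of _ y]) simp
    qed
  next
    assume "\<exists>n1 n2 p q. {p,q} = ends G e \<and> (adj ?H ^^ n1) x p \<and> (adj ?H ^^ n2) q z \<and> n1 + 1 + n2 \<le> n"
    then obtain n1 n2 p q where B: "{p,q} = ends G e" "(adj ?H ^^ n1) x p" "(adj ?H ^^ n2) q z" "n1 + 1 + n2 \<le> n"
      by blast
    from C show ?thesis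
    proof
      assume "adj ?H z y"
      then have "(adj ?H ^^ Suc n2) q y" using B(3) by (rule relpowp_Suc_I[rotated])
      then show ?thesis using B by (intro disjI2 exI[of _ n1] exI[of _ "Suc n2"] exI[of _ p] exI[of _ q]) simp
    next
      assume "ends G e = {z,y}"
      then have "y = p \<or> y = q" using B(1) by auto
      then show ?thesis
      proof
        assume "y = p"
        then show ?thesis using B by (intro disjI1 exI[of _ n1]) simp
      next
        assume yq: "y = q"
        have "(adj ?H ^^ 0) q y" using yq by simp
        then show ?thesis using B by (intro disjI2 exI[of _ n1] exI[of _ 0] exI[of _ p] exI[of _ q]) simp
      qed
    qed
  qed
qed

lemma card_two_disj:
  assumes "finite K" "A \<subseteq> K" "B \<subseteq> K" "A \<inter> B = {}"
  shows "card A + card B \<le> card K"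
proof -
  have "card (A \<union> B) = card A + card B" using assms by (meson card_Un_disjoint finite_subset)
  moreover have "card (A \<union> B) \<le> card K" using assms by (simp add: card_mono)
  ultimately show ?thesis by simp
qed

lemma card_three_disj:
  assumes "finite K" "A \<subseteq> K" "B \<subseteq> K" "C \<subseteq> K" "A \<inter> B = {}" "A \<inter> C = {}" "B \<inter> C = {}"
  shows "card A + card B + card C \<le> card K"
proof -
  have fA: "finite A" and fB: "finite B" using assms finite_subset by blast+
  have "card A + card B = card (A \<union> B)" using card_Un_disjoint[OF fA fB assms(5)] by simp
  moreover have "card (A \<union> B) + card C \<le> card K" using assms by (intro card_two_disj) auto
  ultimately show ?thesis by simp
qed

lemma step_del_edge:
  assumes wf: "wf_graph G" and e: "e \<in> edges G" and IH: "J N D v0 (del_edge G e)"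
  shows "J N D v0 G"
proof -
  let ?H = "del_edge G e"
  let ?K = "comp G v0" and ?K' = "comp ?H v0"
  have fin: "finite (verts G)" using wf unfolding wf_graph_def by blast
  have v0: "v0 \<in> verts G" using IH unfolding J_def by simp
  have IH2: "\<And>s t. reach ?H v0 s \<Longrightarrow> reach ?H s t \<Longrightarrow> wdist ?H s t + N \<le> card ?K' + D"
    using IH unfolding J_def by blast
  have base: "N \<le> card ?K' + D" using IH2[of v0 v0] wdist_0 by simp
  have finK: "finite ?K" using comp_fin fin v0 by blast
  have KK: "?K' \<subseteq> ?K" unfolding comp_def using reach_del_edge by blast
  have subK: "comp ?H x \<subseteq> ?K" if "reach G v0 x" for x
    unfolding comp_def using that reach_del_edge reach_trans by blast
  have ccard: "wdist ?H x y + 1 \<le> card (comp ?H x)" if "reach ?H x y" "x \<in> verts G" for x y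
    using comp_card[of ?H x y] that fin by simp
  show ?thesis unfolding J_def
  proof (intro conjI allI impI)
    show "v0 \<in> verts G" by (rule v0)
    fix s t assume s: "reach G v0 s" and st: "reach G s t"
    have sv: "s \<in> verts G" using reach_verts s v0 by blast
    have tv: "t \<in> verts G" using reach_verts st sv by blast
    have t0: "reach G v0 t" using s st reach_trans by blast
    let ?k = "wdist G s t"
    show "?k + N \<le> card ?K + D"
    proof (cases "reach ?H s t")
      case True
      let ?n = "wdist ?H s t"
      have "(adj ?H ^^ ?n) s t" using wdist_walk[OF True] .
      then have "(adj G ^^ ?n) s t" using relpow_mono adj_del_edge by metis
      then have kn: "?k \<le> ?n" by (rule wdist_le)
      show ?thesis
      proof (cases "reach ?H v0 s")
        case True2: True
        have "?n + N \<le> card ?K' + D" using IH2 True2 True by blast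
        moreover have "card ?K' \<le> card ?K" using KK finK by (simp add: card_mono)
        ultimately show ?thesis using kn by simp
      next
        case False
        have d: "?K' \<inter> comp ?H s = {}" using comp_disj False by blast
        have "card ?K' + card (comp ?H s) \<le> card ?K" using card_two_disj[OF finK KK subK[OF s] d] .
        moreover have "?n + 1 \<le> card (comp ?H s)" using ccard True sv by blast
        ultimately show ?thesis using kn base by simp
      qed
    next
      case False
      obtain n0 where "(adj G ^^ n0) s t" using st reach_relpow by blast
      from del_decomp[OF this, of e] obtain n1 n2 p q where
        B: "{p,q} = ends G e" "(adj ?H ^^ n1) s p" "(adj ?H ^^ n2) q t"
        using False relpow_reach by blast
      have sp: "reach ?H s p" and qt: "reach ?H q t" using B relpow_reach by blast+
      let ?a = "wdist ?H s p" and ?b = "wdist ?H q t"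
      have pqv: "p \<in> verts G" "q \<in> verts G" using wf e B(1) unfolding wf_graph_def by auto
      have "adj G p q" using e B(1) pqv unfolding adj_def by auto
      have w1: "(adj G ^^ ?a) s p" using wdist_walk[OF sp] relpow_mono adj_del_edge by metis
      have w2: "(adj G ^^ ?b) q t" using wdist_walk[OF qt] relpow_mono adj_del_edge by metis
      have "(adj G ^^ Suc ?a) s q" using w1 \<open>adj G p q\<close> by (rule relpowp_Suc_I)
      then have "(adj G ^^ (Suc ?a + ?b)) s t" using w2 by (rule relpow_join)
      then have kab: "?k \<le> ?a + 1 + ?b" using wdist_le by fastforce
      have dst: "comp ?H s \<inter> comp ?H t = {}" using comp_disj False by blast
      have cs: "?a + 1 \<le> card (comp ?H s)" using ccard sp sv by blast
      have ct: "?b + 1 \<le> card (comp ?H t)" using ccard[of t q] qt reach_sym tv wdist_sym by metis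
      have two: "card (comp ?H s) + card (comp ?H t) \<le> card ?K"
        using card_two_disj[OF finK subK[OF s] subK[OF t0] dst] .
      show ?thesis
      proof (cases "reach ?H v0 s")
        case True
        then have "?a + N \<le> card ?K' + D" using IH2 sp by blast
        moreover have "comp ?H s = ?K'" using comp_eq True by metis
        ultimately show ?thesis using kab ct two by simp
      next
        case F1: False
        show ?thesis
        proof (cases "reach ?H v0 t")
          case True
          then have "wdist ?H t q + N \<le> card ?K' + D" using IH2 qt reach_sym by blast
          then have "?b + N \<le> card ?K' + D" using wdist_sym by metis
          moreover have "comp ?H t = ?K'" using comp_eq True by metis
          ultimately show ?thesis using kab cs two by simp
        next
          case F2: False
          have "card ?K' + card (comp ?H s) + card (comp ?H t) \<le> card ?K"
            using card_three_disj[OF finK KK subK[OF s] subK[OF t0]] comp_disj F1 F2 dst by blast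
          then show ?thesis using kab cs ct base by simp
        qed
      qed
    qed
  qed
qed


lemma uw_step: "wf_graph G \<Longrightarrow> e \<in> edges G \<Longrightarrow> z1 \<in> {cu G e, cw G e} \<Longrightarrow> z2 \<in> {cu G e, cw G e} \<Longrightarrow>
  \<exists>j\<le>1. (adj G ^^ j) z1 z2"
proof -
  assume wf: "wf_graph G" and e: "e \<in> edges G" and z: "z1 \<in> {cu G e, cw G e}" "z2 \<in> {cu G e, cw G e}"
  show ?thesis
  proof (cases "z1 = z2")
    case True then show ?thesis by (intro exI[of _ 0]) simp
  next
    case False
    then have "adj G z1 z2" using z adj_uw[OF wf e] by auto
    then have "(adj G ^^ 1) z1 z2" unfolding relpowp_1 .
    then show ?thesis by blast
  qed
qed

lemma contract_dist:
  assumes wf: "wf_graph G" and e: "e \<in> edges G"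
    and w: "(adj (contract G e) ^^ n) (sig G e s) (sig G e t)" and s: "s \<in> verts G"
  shows "\<exists>m\<le>n+1. (adj G ^^ m) s t"
proof -
  let ?u = "cu G e" and ?w = "cw G e"
  have uw: "adj G ?u ?w" "adj G ?w ?u" using adj_uw[OF wf e] by auto
  have T: "sig G e t = t \<or> (t = ?w \<and> sig G e t = ?u)" using sig_cases by blast
  from contract_lift[OF wf e w s refl] show ?thesis
  proof
    assume "\<exists>m\<le>n. (adj G ^^ m) s (sig G e t)"
    then obtain m where m: "m \<le> n" "(adj G ^^ m) s (sig G e t)" by blast
    from T show ?thesis
    proof
      assume "sig G e t = t" then show ?thesis using m by (intro exI[of _ m]) simp
    next
      assume tw: "t = ?w \<and> sig G e t = ?u"
      then have "(adj G ^^ Suc m) s t" using m(2) uw relpowp_Suc_I by metis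
      then show ?thesis using m(1) by (intro exI[of _ "Suc m"]) simp
    qed
  next
    assume "\<exists>n1 n2 z1 z2. z1 \<in> {?u, ?w} \<and> z2 \<in> {?u, ?w} \<and> (adj G ^^ n1) s z1 \<and> (adj G ^^ n2) z2 (sig G e t) \<and> n1 + n2 \<le> n"
    then obtain n1 n2 z1 z2 where B: "z1 \<in> {?u, ?w}" "z2 \<in> {?u, ?w}" "(adj G ^^ n1) s z1"
      "(adj G ^^ n2) z2 (sig G e t)" "n1 + n2 \<le> n" by blast
    from T show ?thesis
    proof
      assume st: "sig G e t = t"
      obtain j where j: "j \<le> 1" "(adj G ^^ j) z1 z2" using uw_step[OF wf e B(1,2)] by blast
      have "(adj G ^^ (n1 + j + n2)) s t" using B(3) j(2) B(4) st relpow_join by metis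
      then show ?thesis using j(1) B(5) by (intro exI[of _ "n1 + j + n2"]) simp
    next
      assume tw: "t = ?w \<and> sig G e t = ?u"
      obtain j where j: "j \<le> 1" "(adj G ^^ j) z1 ?w" using uw_step[OF wf e B(1)] by blast
      have "(adj G ^^ (n1 + j)) s t" using B(3) j(2) tw relpow_join by metis
      then show ?thesis using j(1) B(5) by (intro exI[of _ "n1 + j"]) simp
    qed
  qed
qed

lemma step_contract:
  assumes wf: "wf_graph G" and e: "e \<in> edges G" and IH: "J N D v0 (contract G e)"
  shows "J N D v0 G"
proof -
  let ?H = "contract G e"
  let ?K = "comp G v0" and ?K' = "comp ?H v0"
  let ?u = "cu G e" and ?w = "cw G e"
  have fin: "finite (verts G)" using wf unfolding wf_graph_def by blast
  have v0H: "v0 \<in> verts ?H" using IH unfolding J_def by simp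
  then have v0: "v0 \<in> verts G" and v0w: "v0 \<noteq> ?w" by auto
  have sv0: "sig G e v0 = v0" using v0w unfolding sig_def by simp
  have IH2: "\<And>s t. reach ?H v0 s \<Longrightarrow> reach ?H s t \<Longrightarrow> wdist ?H s t + N \<le> card ?K' + D"
    using IH unfolding J_def by blast
  have finK: "finite ?K" using comp_fin fin v0 by blast
  have KK: "?K' \<subseteq> ?K" unfolding comp_def using contract_reach_up[OF wf e] by blast
  have wK': "?w \<notin> ?K'" using comp_sub[OF v0H] by auto
  have uw: "adj G ?u ?w" "adj G ?w ?u" using adj_uw[OF wf e] by auto
  show ?thesis unfolding J_def
  proof (intro conjI allI impI)
    show "v0 \<in> verts G" by (rule v0)
    fix s t assume s: "reach G v0 s" and st: "reach G s t"
    have sv: "s \<in> verts G" using reach_verts s v0 by blast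
    have r1: "reach ?H v0 (sig G e s)" using contract_reach_down[OF wf e s] sv0 by simp
    have r2: "reach ?H (sig G e s) (sig G e t)" using contract_reach_down[OF wf e st] .
    let ?n = "wdist ?H (sig G e s) (sig G e t)"
    have I: "?n + N \<le> card ?K' + D" using IH2 r1 r2 by blast
    have wn: "(adj ?H ^^ ?n) (sig G e s) (sig G e t)" using wdist_walk[OF r2] .
    show "wdist G s t + N \<le> card ?K + D"
    proof (cases "?w \<in> ?K")
      case True
      have "?K' \<subseteq> ?K - {?w}" using KK wK' by blast
      then have "card ?K' \<le> card (?K - {?w})" using finK by (simp add: card_mono)
      moreover have "card (?K - {?w}) = card ?K - 1" using True finK by (simp add: card_Diff_singleton)
      moreover have "0 < card ?K" using True finK card_gt_0_iff by blast
      ultimately have ck: "card ?K' + 1 \<le> card ?K" by simp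
      obtain m where "m \<le> ?n + 1" "(adj G ^^ m) s t" using contract_dist[OF wf e wn sv] by blast
      then have "wdist G s t \<le> ?n + 1" using wdist_le by fastforce
      then show ?thesis using I ck by simp
    next
      case False
      have uK: "?u \<notin> ?K"
      proof
        assume "?u \<in> ?K"
        then have "reach G v0 ?w" using uw unfolding comp_def by (meson adj_reach reach_trans mem_Collect_eq)
        then show False using False unfolding comp_def by simp
      qed
      have sK: "s \<in> ?K" "t \<in> ?K" using s st reach_trans unfolding comp_def by blast+
      then have "s \<noteq> ?w" "t \<noteq> ?w" using False by auto
      then have ss: "sig G e s = s" "sig G e t = t" unfolding sig_def by auto
      from contract_lift[OF wf e wn sv refl] show ?thesis
      proof
        assume "\<exists>m\<le>?n. (adj G ^^ m) s (sig G e t)"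
        then obtain m where "m \<le> ?n" "(adj G ^^ m) s t" using ss by auto
        then have "wdist G s t \<le> ?n" using wdist_le by fastforce
        moreover have "card ?K' \<le> card ?K" using KK finK by (simp add: card_mono)
        ultimately show ?thesis using I by simp
      next
        assume "\<exists>n1 n2 z1 z2. z1 \<in> {?u, ?w} \<and> z2 \<in> {?u, ?w} \<and> (adj G ^^ n1) s z1 \<and> (adj G ^^ n2) z2 (sig G e t) \<and> n1 + n2 \<le> ?n"
        then obtain n1 z1 where "z1 \<in> {?u, ?w}" "(adj G ^^ n1) s z1" by blast
        then have "z1 \<in> ?K" "z1 \<in> {?u,?w}" using s relpow_reach reach_trans unfolding comp_def by blast+
        then show ?thesis using uK False by auto
      qed
    qed
  qed
qed

lemma adj_del_vertex: "(\<forall>e\<in>edges G. v \<notin> ends G e) \<Longrightarrow> adj (del_vertex G v) = adj G"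
  unfolding adj_def del_vertex_def by (intro ext) auto

lemma step_del_vertex:
  assumes iso: "\<forall>e\<in>edges G. v \<notin> ends G e" and IH: "J N D v0 (del_vertex G v)"
  shows "J N D v0 G"
proof -
  have a: "adj (del_vertex G v) = adj G" using adj_del_vertex[OF iso] .
  have "wdist (del_vertex G v) = wdist G" "comp (del_vertex G v) = comp G"
    unfolding wdist_def comp_def a by (intro ext; simp)+
  moreover have "verts (del_vertex G v) \<subseteq> verts G" unfolding del_vertex_def by auto
  ultimately show ?thesis using IH a unfolding J_def by auto
qed

lemma elem_minor_wf: "wf_graph G \<Longrightarrow> elem_minor H G \<Longrightarrow> wf_graph H"
  unfolding elem_minor_def using wf_del_vertex wf_del_edge wf_contract by metis

lemma step_J: "wf_graph G \<Longrightarrow> elem_minor H G \<Longrightarrow> J N D v0 H \<Longrightarrow> J N D v0 G"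
  unfolding elem_minor_def using step_del_vertex step_del_edge step_contract by metis

lemma chain_J:
  assumes "elem_minor\<^sup>*\<^sup>* M H" and "J N D v0 M"
  shows "wf_graph H \<longrightarrow> J N D v0 H"
  using assms(1)
proof (induction rule: rtranclp_induct)
  case base then show ?case using assms(2) by simp
next
  case (step y z)
  show ?case
  proof
    assume "wf_graph z"
    then have "wf_graph y" using elem_minor_wf step.hyps(2) by blast
    then show "J N D v0 z" using step step_J \<open>wf_graph z\<close> by blast
  qed
qed


lemma iso_walk:
  assumes f: "bij_betw f (verts X) (verts M)" and g: "bij_betw g (edges X) (edges M)"
    and en: "\<forall>e\<in>edges X. ends M (g e) = f ` ends X e"
  shows "(adj X ^^ n) a b \<Longrightarrow> (adj M ^^ n) (f a) (f b)"
proof (induction n arbitrary: b)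
  case 0 then show ?case by simp
next
  case (Suc n)
  from Suc.prems obtain z where z: "(adj X ^^ n) a z" "adj X z b" by (rule relpowp_Suc_E)
  from z(2) obtain e where e: "e \<in> edges X" "ends X e = {z,b}" "z \<in> verts X" "b \<in> verts X"
    unfolding adj_def by auto
  have "g e \<in> edges M" using g e bij_betw_apply by metis
  moreover have "ends M (g e) = {f z, f b}" using en e by simp
  moreover have "f z \<in> verts M" "f b \<in> verts M" using f e bij_betw_apply by metis+
  ultimately have "adj M (f z) (f b)" unfolding adj_def by blast
  then show ?case using Suc.IH[OF z(1)] by (rule relpowp_Suc_I[rotated])
qed

lemma base_J:
  assumes iso: "graph_iso X M" and x0: "x0 \<in> verts X"
    and W: "\<forall>a\<in>verts X. \<forall>b\<in>verts X. \<exists>n\<le>D. (adj X ^^ n) a b"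
  shows "\<exists>v0. J (card (verts X)) D v0 M"
proof -
  obtain f g where f: "bij_betw f (verts X) (verts M)" and g: "bij_betw g (edges X) (edges M)"
    and en: "\<forall>e\<in>edges X. ends M (g e) = f ` ends X e" using iso unfolding graph_iso_def by blast
  note IW = iso_walk[OF f g en]
  let ?v0 = "f x0"
  have v0: "?v0 \<in> verts M" using bij_betw_apply[OF f x0] .
  have img: "f ` verts X = verts M" using bij_betw_imp_surj_on[OF f] .
  have cM: "comp M ?v0 = verts M"
  proof
    show "comp M ?v0 \<subseteq> verts M" using comp_sub[OF v0] .
    show "verts M \<subseteq> comp M ?v0"
    proof
      fix y assume "y \<in> verts M"
      then obtain a where a: "a \<in> verts X" "y = f a" using img by (metis imageE)
      then obtain n where "(adj X ^^ n) x0 a" using W x0 by blast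
      then have "(adj M ^^ n) ?v0 y" using IW a by simp
      then show "y \<in> comp M ?v0" unfolding comp_def using relpow_reach by blast
    qed
  qed
  have card: "card (verts M) = card (verts X)" using bij_betw_same_card[OF f] by simp
  have "J (card (verts X)) D ?v0 M" unfolding J_def
  proof (intro conjI allI impI)
    show "?v0 \<in> verts M" by (rule v0)
    fix s t assume s: "reach M ?v0 s" and st: "reach M s t"
    have sv: "s \<in> verts M" using reach_verts s v0 by blast
    have tv: "t \<in> verts M" using reach_verts st sv by blast
    obtain a where a: "a \<in> verts X" "s = f a" using sv img by (metis imageE)
    obtain b where b: "b \<in> verts X" "t = f b" using tv img by (metis imageE)
    note ab = a(1) b(1) a(2) b(2)
    then obtain n where n: "n \<le> D" "(adj X ^^ n) a b" using W by blast
    then have "(adj M ^^ n) s t" using IW ab by simp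
    then have "wdist M s t \<le> n" by (rule wdist_le)
    then have "wdist M s t \<le> D" using n(1) by simp
    then show "wdist M s t + card (verts X) \<le> card (comp M ?v0) + D" using cM card by simp
  qed
  then show ?thesis by blast
qed

lemma LB_core:
  assumes wf: "wf_graph H" and JH: "J N D v0 H"
  shows "N \<le> sp H + D + 1"
proof -
  have fin: "finite (verts H)" using wf unfolding wf_graph_def by blast
  have v0: "v0 \<in> verts H" using JH unfolding J_def by simp
  have IH: "\<And>s t. reach H v0 s \<Longrightarrow> reach H s t \<Longrightarrow> wdist H s t + N \<le> card (comp H v0) + D"
    using JH unfolding J_def by blast
  have base: "N \<le> card (comp H v0) + D" using IH[of v0 v0] wdist_0 by simp
  obtain vs es where U: "unique_shortest_path H vs es" "usp H = length vs"
    using usp_attained[OF fin v0] by blast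
  have ip: "is_path H vs es" using U unfolding unique_shortest_path_def by blast
  let ?s = "hd vs" and ?t = "last vs"
  have st: "reach H ?s ?t" using path_reach_last[OF ip] .
  have sv: "?s \<in> verts H" using ip unfolding is_path_def by auto
  have lenc: "length vs \<le> card (verts H)" using usp_path_len[OF fin U(1)] .
  have spH: "sp H = card (verts H) - length vs" unfolding sp_def using U by simp
  have ld: "length vs \<le> wdist H ?s ?t + 1"
  proof -
    obtain vs' es' where p: "path_between H ?s ?t vs' es'" "length es' \<le> wdist H ?s ?t"
      using W2P[OF sv wdist_walk[OF st]] by blast
    have "length vs \<le> length vs'" using U(1) p(1) unfolding unique_shortest_path_def by blast
    moreover have "length vs' = length es' + 1" using p(1) unfolding path_between_def is_path_def by simp
    ultimately show ?thesis using p(2) by simp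
  qed
  show ?thesis
  proof (cases "reach H v0 ?s")
    case True
    have "wdist H ?s ?t + N \<le> card (comp H v0) + D" using IH True st by blast
    moreover have "card (comp H v0) \<le> card (verts H)" using comp_sub[OF v0] fin by (simp add: card_mono)
    ultimately show ?thesis using ld lenc spH by simp
  next
    case False
    have sub1: "set vs \<subseteq> comp H ?s" using path_reach[OF ip] unfolding comp_def by blast
    have d: "comp H v0 \<inter> comp H ?s = {}" using comp_disj False by blast
    have "card (comp H v0) + card (comp H ?s) \<le> card (verts H)"
      using card_two_disj[OF fin comp_sub[OF v0] comp_sub[OF sv] d] .
    moreover have "length vs \<le> card (comp H ?s)"
    proof -
      have "length vs = card (set vs)" using ip unfolding is_path_def by (simp add: distinct_card)
      then show ?thesis using sub1 comp_fin[OF fin sv] by (simp add: card_mono)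
    qed
    ultimately show ?thesis using base spH lenc by simp
  qed
qed

lemma iso_refl: "graph_iso G G"
  unfolding graph_iso_def by (intro exI[of _ id]) (simp add: bij_betw_id)

lemma is_minor_chain: "elem_minor\<^sup>*\<^sup>* G H \<Longrightarrow> is_minor G H"
  unfolding is_minor_def using iso_refl by blast

lemma spfloor_le: "wf_graph H \<Longrightarrow> is_minor G H \<Longrightarrow> spfloor G \<le> sp H"
  unfolding spfloor_def by (rule Least_le) blast

lemma dist_diam:
  assumes wf: "wf_graph X" and conn: "\<forall>a\<in>verts X. \<forall>b\<in>verts X. reach X a b"
  shows "\<forall>a\<in>verts X. \<forall>b\<in>verts X. \<exists>n\<le>diameter X. (adj X ^^ n) a b"
proof (intro ballI)
  fix a b assume a: "a \<in> verts X" and b: "b \<in> verts X"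
  have fin: "finite (verts X)" using wf unfolding wf_graph_def by blast
  obtain vs es where p: "path_between X a b vs es" using reach_path a conn b by blast
  have "(adj X ^^ gdist X a b) a b" using gdist_walk[OF p] .
  moreover have "gdist X a b \<le> diameter X" using diam_ge fin a b by blast
  ultimately show "\<exists>n\<le>diameter X. (adj X ^^ n) a b" by blast
qed

lemma LB:
  assumes wf: "wf_graph X" and ne: "verts X \<noteq> {}" and conn: "\<forall>a\<in>verts X. \<forall>b\<in>verts X. reach X a b"
  shows "card (verts X) \<le> spfloor X + diameter X + 1"
proof -
  have ex: "\<exists>k. \<exists>H. wf_graph H \<and> is_minor X H \<and> sp H = k"
    using wf is_minor_chain[of X X] by blast
  obtain H where H: "wf_graph H" "is_minor X H" "sp H = spfloor X"
    using LeastI_ex[OF ex] unfolding spfloor_def by blast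
  obtain M where M: "graph_iso X M" "elem_minor\<^sup>*\<^sup>* M H" using H(2) unfolding is_minor_def by blast
  obtain x0 where x0: "x0 \<in> verts X" using ne by blast
  obtain v0 where "J (card (verts X)) (diameter X) v0 M"
    using base_J[OF M(1) x0 dist_diam[OF wf conn]] by blast
  then have "J (card (verts X)) (diameter X) v0 H" using chain_J M(2) H(1) by blast
  from LB_core[OF H(1) this] show ?thesis using H(3) by simp
qed

lemma USPdiam:
  assumes wf: "wf_graph X" and bp: "BP X" and ne: "verts X \<noteq> {}"
    and conn: "\<forall>a\<in>verts X. \<forall>b\<in>verts X. reach X a b"
  shows "diameter X + 1 \<le> usp X"
proof -
  have fin: "finite (verts X)" using wf unfolding wf_graph_def by blast
  obtain a b where ab: "a \<in> verts X" "b \<in> verts X" "diameter X = gdist X a b"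
    using diam_attained[OF fin ne] by blast
  obtain vs0 es0 where "path_between X a b vs0 es0" using reach_path ab conn by blast
  then obtain vs es where p: "path_between X a b vs es" "length es = gdist X a b"
    using gdist_attained by blast
  have ip: "is_path X vs es" and h: "hd vs = a" "last vs = b" using p unfolding path_between_def by auto
  have "unique_shortest_path X vs es" unfolding unique_shortest_path_def
  proof (intro conjI allI impI)
    show "is_path X vs es" by (rule ip)
  next
    fix vs' es' assume q: "path_between X (hd vs) (last vs) vs' es'"
    then have "gdist X a b \<le> length es'" using gdist_le_path[of X a b vs' es'] h by simp
    then show "length vs \<le> length vs'" using p(2) ip q unfolding is_path_def path_between_def by simp
  next
    fix vs' es' assume q: "path_between X (hd vs) (last vs) vs' es' \<and> length vs' = length vs"
    then have q1: "is_path X vs' es'" and q2: "hd vs' = hd vs" and q3: "last vs' = last vs"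
      unfolding path_between_def by auto
    have "vs = vs' \<and> es = es'" using path_unique[OF wf bp ip q1 q2[symmetric] q3[symmetric]] .
    then show "vs' = vs" by simp
  next
    fix vs' es' assume q: "path_between X (hd vs) (last vs) vs' es' \<and> length vs' = length vs"
    then have q1: "is_path X vs' es'" and q2: "hd vs' = hd vs" and q3: "last vs' = last vs"
      unfolding path_between_def by auto
    have "vs = vs' \<and> es = es'" using path_unique[OF wf bp ip q1 q2[symmetric] q3[symmetric]] .
    then show "es' = es" by simp
  qed
  then have "length vs \<le> usp X" using usp_ge fin by blast
  moreover have "length vs = diameter X + 1" using ip p(2) ab(3) unfolding is_path_def by simp
  ultimately show ?thesis by simp
qed


lemma path_concat:
  assumes p1: "is_path G vs1 es1" and p2: "is_path G vs2 es2" and d: "set vs1 \<inter> set vs2 = {}"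
    and e: "e \<in> edges G" and en: "ends G e = {last vs1, hd vs2}"
  shows "is_path G (vs1 @ vs2) (es1 @ e # es2)"
proof -
  have L1: "length vs1 = length es1 + 1" and L2: "length vs2 = length es2 + 1"
    and n1: "vs1 \<noteq> []" and n2: "vs2 \<noteq> []"
    using p1 p2 unfolding is_path_def by auto
  have E1: "\<And>i. i < length es1 \<Longrightarrow> es1 ! i \<in> edges G \<and> ends G (es1 ! i) = {vs1 ! i, vs1 ! Suc i}"
    using p1 unfolding is_path_def by blast
  have E2: "\<And>i. i < length es2 \<Longrightarrow> es2 ! i \<in> edges G \<and> ends G (es2 ! i) = {vs2 ! i, vs2 ! Suc i}"
    using p2 unfolding is_path_def by blast
  have lv1: "last vs1 = vs1 ! length es1" using L1 n1 by (simp add: last_conv_nth)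
  have hv2: "hd vs2 = vs2 ! 0" using n2 by (simp add: hd_conv_nth)
  show ?thesis unfolding is_path_def
  proof (intro conjI allI impI)
    show "vs1 @ vs2 \<noteq> []" using n1 by simp
    show "distinct (vs1 @ vs2)" using p1 p2 d unfolding is_path_def by simp
    show "length (vs1 @ vs2) = length (es1 @ e # es2) + 1" using L1 L2 by simp
    show "set (vs1 @ vs2) \<subseteq> verts G" using p1 p2 unfolding is_path_def by simp
    fix i assume i: "i < length (es1 @ e # es2)"
    have "(es1 @ e # es2) ! i \<in> edges G \<and> ends G ((es1 @ e # es2) ! i) = {(vs1 @ vs2) ! i, (vs1 @ vs2) ! Suc i}"
    proof (cases "i < length es1")
      case True
      then show ?thesis using E1[OF True] L1 by (simp add: nth_append)
    next
      case False
      show ?thesis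
      proof (cases "i = length es1")
        case True
        then show ?thesis using e en lv1 hv2 L1 by (simp add: nth_append)
      next
        case F2: False
        then obtain k where k: "i = Suc (length es1 + k)" using False by (metis add_Suc_right less_imp_Suc_add linorder_neqE_nat)
        then have kl: "k < length es2" using i by simp
        have "(es1 @ e # es2) ! i = es2 ! k" using k by (simp add: nth_append)
        moreover have "(vs1 @ vs2) ! i = vs2 ! k" using k L1 by (simp add: nth_append)
        moreover have "(vs1 @ vs2) ! Suc i = vs2 ! Suc k" using k L1 by (simp add: nth_append)
        ultimately show ?thesis using E2[OF kl] by simp
      qed
    qed
    then show "(es1 @ e # es2) ! i \<in> edges G" "ends G ((es1 @ e # es2) ! i) = {(vs1 @ vs2) ! i, (vs1 @ vs2) ! Suc i}"
      by blast+
  qed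
qed

lemma path_split:
  assumes p: "is_path G vs es" and i: "i < length es"
  shows "is_path G (take (Suc i) vs) (take i es) \<and> is_path G (drop (Suc i) vs) (drop (Suc i) es) \<and>
    es!i \<notin> set (take i es) \<and> es!i \<notin> set (drop (Suc i) es) \<and>
    last (take (Suc i) vs) = vs!i \<and> hd (drop (Suc i) vs) = vs!Suc i \<and>
    hd (take (Suc i) vs) = hd vs \<and> last (drop (Suc i) vs) = last vs"
proof -
  have L: "length vs = length es + 1" and ne: "vs \<noteq> []" and dv: "distinct vs" and sv: "set vs \<subseteq> verts G"
    using p unfolding is_path_def by auto
  have E: "\<And>j. j < length es \<Longrightarrow> es ! j \<in> edges G \<and> ends G (es ! j) = {vs ! j, vs ! Suc j}"
    using p unfolding is_path_def by blast
  have A: "is_path G (take (Suc i) vs) (take i es)"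
    unfolding is_path_def
  proof (intro conjI allI impI)
    show "take (Suc i) vs \<noteq> []" using ne by (cases vs) auto
    show "distinct (take (Suc i) vs)" using dv by simp
    show "length (take (Suc i) vs) = length (take i es) + 1" using L i by simp
    show "set (take (Suc i) vs) \<subseteq> verts G" using sv by (meson order_trans set_take_subset)
    fix j assume j: "j < length (take i es)"
    then have ji: "j < i" by simp
    then show "take i es ! j \<in> edges G" "ends G (take i es ! j) = {take (Suc i) vs ! j, take (Suc i) vs ! Suc j}"
      using E[of j] i by auto
  qed
  have B: "is_path G (drop (Suc i) vs) (drop (Suc i) es)"
    unfolding is_path_def
  proof (intro conjI allI impI)
    show "drop (Suc i) vs \<noteq> []" using L i by simp
    show "distinct (drop (Suc i) vs)" using dv by simp
    show "length (drop (Suc i) vs) = length (drop (Suc i) es) + 1" using L i by simp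
    show "set (drop (Suc i) vs) \<subseteq> verts G" using sv by (meson order_trans set_drop_subset)
    fix j assume j: "j < length (drop (Suc i) es)"
    then have ji: "Suc i + j < length es" by simp
    then show "drop (Suc i) es ! j \<in> edges G" "ends G (drop (Suc i) es ! j) = {drop (Suc i) vs ! j, drop (Suc i) vs ! Suc j}"
      using E[of "Suc i + j"] L by auto
  qed
  have C: "es!i \<notin> set (take i es)"
  proof
    assume "es!i \<in> set (take i es)"
    then obtain j where j: "j < i" "es!j = es!i" using i by (auto simp: in_set_conv_nth)
    then have "{vs!j, vs!Suc j} = {vs!i, vs!Suc i}" using E[of j] E[of i] i by simp
    then have "vs!j = vs!i \<or> vs!j = vs!Suc i" by auto
    moreover have "vs!j \<noteq> vs!i" "vs!j \<noteq> vs!Suc i" using dv j i L by (simp_all add: nth_eq_iff_index_eq)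
    ultimately show False by blast
  qed
  have D: "es!i \<notin> set (drop (Suc i) es)"
  proof
    assume "es!i \<in> set (drop (Suc i) es)"
    then obtain k where k: "k < length es - Suc i" "es!(Suc i + k) = es!i" by (auto simp: in_set_conv_nth)
    then have kl: "Suc i + k < length es" by simp
    then have "{vs!(Suc i + k), vs!Suc (Suc i + k)} = {vs!i, vs!Suc i}" using E[of "Suc i + k"] E[of i] i k by simp
    then have "vs!Suc (Suc i + k) = vs!i \<or> vs!Suc (Suc i + k) = vs!Suc i" by auto
    moreover have "vs!Suc (Suc i + k) \<noteq> vs!i" "vs!Suc (Suc i + k) \<noteq> vs!Suc i"
      using dv kl i L by (simp_all add: nth_eq_iff_index_eq)
    ultimately show False by blast
  qed
  have "last (take (Suc i) vs) = vs!i" using L i by (simp add: take_Suc_conv_app_nth)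
  moreover have "hd (drop (Suc i) vs) = vs!Suc i" using L i by (simp add: hd_drop_conv_nth)
  moreover have "hd (take (Suc i) vs) = hd vs" using ne by simp
  moreover have "last (drop (Suc i) vs) = last vs" using L i by simp
  ultimately show ?thesis using A B C D by blast
qed


definition reatt :: "mgraph \<Rightarrow> nat \<Rightarrow> nat \<Rightarrow> nat \<Rightarrow> mgraph" where
  "reatt T e a b = T\<lparr>ends := (ends T)(e := {a,b})\<rparr>"

lemma reatt_simps[simp]: "verts (reatt T e a b) = verts T" "edges (reatt T e a b) = edges T"
  "ends (reatt T e a b) e = {a,b}" "x \<noteq> e \<Longrightarrow> ends (reatt T e a b) x = ends T x"
  unfolding reatt_def by simp_all

lemma del_edge_case:
  assumes wf: "wf_graph T" and bp: "BP T" and conn: "\<forall>a\<in>verts T. \<forall>b\<in>verts T. reach T a b"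
    and e: "e \<in> edges T" and big: "diameter T \<le> diameter (contract T e)"
  shows "spfloor (del_edge T e) + diameter T + 2 \<le> card (verts T)"
proof -
  let ?G = "del_edge T e" and ?C = "contract T e"
  let ?a = "cu T e" and ?b = "cw T e"
  have U: "ends T e = {?a, ?b}" "?a \<noteq> ?b" "?a \<in> verts T" "?b \<in> verts T" using ends_uw[OF wf e] by auto
  have fin: "finite (verts T)" using wf unfolding wf_graph_def by blast
  have nab: "\<not> reach ?G ?a ?b" using bp e U(1) unfolding BP_def by blast
  define C1 where "C1 = comp ?G ?a"
  define C2 where "C2 = comp ?G ?b"
  have disj: "C1 \<inter> C2 = {}" unfolding C1_def C2_def using comp_disj nab by blast
  have sub1: "C1 \<subseteq> verts T" and sub2: "C2 \<subseteq> verts T" unfolding C1_def C2_def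
    using comp_sub[of ?a ?G] comp_sub[of ?b ?G] U by auto
  have fin1: "finite C1" and fin2: "finite C2" using sub1 sub2 fin finite_subset by blast+
  have aC1: "?a \<in> C1" and bC2: "?b \<in> C2" unfolding C1_def C2_def by (simp_all add: comp_self)
  have cover: "z \<in> C1 \<or> z \<in> C2" if z: "z \<in> verts T" for z
  proof -
    obtain n where "(adj T ^^ n) ?a z" using conn z U reach_relpow by blast
    from del_decomp[OF this, of e] show ?thesis
    proof
      assume "\<exists>m\<le>n. (adj ?G ^^ m) ?a z"
      then have "reach ?G ?a z" using relpow_reach by blast
      then show ?thesis unfolding C1_def comp_def by simp
    next
      assume "\<exists>n1 n2 p q. {p,q} = ends T e \<and> (adj ?G ^^ n1) ?a p \<and> (adj ?G ^^ n2) q z \<and> n1 + 1 + n2 \<le> n"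
      then obtain p q n2 where pq: "{p,q} = {?a,?b}" "(adj ?G ^^ n2) q z" using U(1) by metis
      then have "reach ?G q z" using relpow_reach by blast
      moreover have "q = ?a \<or> q = ?b" using pq(1) by auto
      ultimately show ?thesis unfolding C1_def C2_def comp_def by auto
    qed
  qed
  have inC: "reach ?G x y" if "x \<in> comp ?G c" "y \<in> comp ?G c" for x y c
    using that unfolding comp_def using reach_sym reach_trans by blast
  have comp_cl: "y \<in> comp ?G c" if "x \<in> comp ?G c" "reach ?G x y" for x y c
    using that unfolding comp_def using reach_trans by blast
  define S1 where "S1 = (\<lambda>(x,y). wdist ?G x y) ` (C1 \<times> C1)"
  define S2 where "S2 = (\<lambda>(x,y). wdist ?G x y) ` (C2 \<times> C2)"
  have fS: "finite S1" "S1 \<noteq> {}" "finite S2" "S2 \<noteq> {}" unfolding S1_def S2_def using fin1 fin2 aC1 bC2 by auto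
  define d1 where "d1 = Max S1"
  define d2 where "d2 = Max S2"
  obtain x1 a' where xa: "x1 \<in> C1" "a' \<in> C1" "wdist ?G x1 a' = d1"
    using Max_in[OF fS(1,2)] unfolding d1_def S1_def by auto
  obtain b' y2 where yb: "b' \<in> C2" "y2 \<in> C2" "wdist ?G b' y2 = d2"
    using Max_in[OF fS(3,4)] unfolding d2_def S2_def by auto
  have bd1: "wdist ?G x y \<le> d1" if "x \<in> C1" "y \<in> C1" for x y
    unfolding d1_def using Max_ge[OF fS(1)] that unfolding S1_def by blast
  have bd2: "wdist ?G x y \<le> d2" if "x \<in> C2" "y \<in> C2" for x y
    unfolding d2_def using Max_ge[OF fS(3)] that unfolding S2_def by blast
  have walkC: "\<exists>m\<le>wdist ?G x y. (adj ?C ^^ m) (sig T e x) (sig T e y)" if "reach ?G x y" for x y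
  proof -
    have "(adj ?G ^^ wdist ?G x y) x y" using wdist_walk[OF that] .
    then have "(adj T ^^ wdist ?G x y) x y" using relpow_mono adj_del_edge by metis
    then show ?thesis using contract_walk_down[OF wf e] by blast
  qed
  have W1: "\<exists>m\<le>d1. (adj ?C ^^ m) (sig T e x) (sig T e y)" if "x \<in> C1" "y \<in> C1" for x y
    using walkC[OF inC[OF that[unfolded C1_def]]] bd1[OF that] le_trans by blast
  have W2: "\<exists>m\<le>d2. (adj ?C ^^ m) (sig T e x) (sig T e y)" if "x \<in> C2" "y \<in> C2" for x y
    using walkC[OF inC[OF that[unfolded C2_def]]] bd2[OF that] le_trans by blast
  have sa: "sig T e ?a = ?a" "sig T e ?b = ?a" unfolding sig_def using U by auto
  have diamC: "diameter ?C \<le> d1 + d2"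
  proof (rule diam_le)
    show "verts ?C \<noteq> {}" using U by auto
    fix p q assume p: "p \<in> verts ?C" and q: "q \<in> verts ?C"
    then have pT: "p \<in> verts T" "p \<noteq> ?b" and qT: "q \<in> verts T" "q \<noteq> ?b" by auto
    then have sp: "sig T e p = p" "sig T e q = q" unfolding sig_def by auto
    have "\<exists>n\<le>d1+d2. (adj ?C ^^ n) p q"
    proof (cases "p \<in> C1")
      case pc: True
      show ?thesis
      proof (cases "q \<in> C1")
        case True
        then obtain m where "m \<le> d1" "(adj ?C ^^ m) p q" using W1[OF pc True] sp by auto
        then show ?thesis by (intro exI[of _ m]) simp
      next
        case False
        then have qc: "q \<in> C2" using cover qT by blast
        obtain m1 where m1: "m1 \<le> d1" "(adj ?C ^^ m1) p ?a" using W1[OF pc aC1] sp sa by auto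
        obtain m2 where m2: "m2 \<le> d2" "(adj ?C ^^ m2) ?a q" using W2[OF bC2 qc] sp sa by auto
        have "(adj ?C ^^ (m1 + m2)) p q" using relpow_join m1(2) m2(2) by fast
        then show ?thesis using m1(1) m2(1) by (intro exI[of _ "m1 + m2"]) simp
      qed
    next
      case False
      then have pc: "p \<in> C2" using cover pT by blast
      show ?thesis
      proof (cases "q \<in> C1")
        case True
        obtain m1 where m1: "m1 \<le> d2" "(adj ?C ^^ m1) p ?a" using W2[OF pc bC2] sp sa by auto
        obtain m2 where m2: "m2 \<le> d1" "(adj ?C ^^ m2) ?a q" using W1[OF aC1 True] sp sa by auto
        have "(adj ?C ^^ (m1 + m2)) p q" using relpow_join m1(2) m2(2) by fast
        then show ?thesis using m1(1) m2(1) by (intro exI[of _ "m1 + m2"]) simp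
      next
        case False
        then have qc: "q \<in> C2" using cover qT by blast
        obtain m where "m \<le> d2" "(adj ?C ^^ m) p q" using W2[OF pc qc] sp by auto
        then show ?thesis by (intro exI[of _ m]) simp
      qed
    qed
    then obtain n where n: "n \<le> d1 + d2" "(adj ?C ^^ n) p q" by blast
    have "gdist ?C p q \<le> n" using gdist_le_walk[OF p n(2)] .
    then show "gdist ?C p q \<le> d1 + d2" using n(1) by simp
  qed
  have Dd: "diameter T \<le> d1 + d2" using big diamC by simp
  have r1: "reach ?G x1 a'" using inC xa unfolding C1_def by blast
  have r2: "reach ?G b' y2" using inC yb unfolding C2_def by blast
  have x1v: "x1 \<in> verts ?G" "b' \<in> verts ?G" using xa yb sub1 sub2 by auto
  obtain vs1 es1 where P1: "path_between ?G x1 a' vs1 es1" using reach_path[OF x1v(1) r1] by blast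
  obtain vs2 es2 where P2: "path_between ?G b' y2 vs2 es2" using reach_path[OF x1v(2) r2] by blast
  have ip1: "is_path ?G vs1 es1" "hd vs1 = x1" "last vs1 = a'" using P1 unfolding path_between_def by auto
  have ip2: "is_path ?G vs2 es2" "hd vs2 = b'" "last vs2 = y2" using P2 unfolding path_between_def by auto
  have l1: "d1 \<le> length es1" using path_walk_last[OF ip1(1)] ip1 xa(3) wdist_le by metis
  have l2: "d2 \<le> length es2" using path_walk_last[OF ip2(1)] ip2 yb(3) wdist_le by metis
  have sv1: "set vs1 \<subseteq> C1" using path_reach[OF ip1(1)] ip1(2) comp_cl xa(1) unfolding C1_def by blast
  have sv2: "set vs2 \<subseteq> C2" using path_reach[OF ip2(1)] ip2(2) comp_cl yb(1) unfolding C2_def by blast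
  have dv: "set vs1 \<inter> set vs2 = {}" using sv1 sv2 disj by blast
  have anb': "a' \<noteq> b'" using xa yb disj by blast
  define H where "H = reatt T e a' b'"
  have wfH: "wf_graph H" unfolding wf_graph_def
  proof (intro conjI ballI)
    show "finite (verts H)" "finite (edges H)" using wf unfolding H_def wf_graph_def by auto
    fix x assume x: "x \<in> edges H"
    show "ends H x \<subseteq> verts H" "card (ends H x) = 2"
    proof -
      have "ends H x \<subseteq> verts H \<and> card (ends H x) = 2"
      proof (cases "x = e")
        case True
        then show ?thesis unfolding H_def using xa yb sub1 sub2 anb' by auto
      next
        case False
        then show ?thesis unfolding H_def using wf x unfolding wf_graph_def H_def by auto
      qed
      then show "ends H x \<subseteq> verts H" "card (ends H x) = 2" by blast+
    qed
  qed
  have GH: "is_path H vs es" if "is_path ?G vs es" for vs es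
  proof -
    have t: "is_path T vs es" "e \<notin> set es" using path_del_edge2[OF that] by auto
    have "\<And>i. i < length es \<Longrightarrow> es ! i \<noteq> e" using t(2) nth_mem by metis
    then show ?thesis using t(1) unfolding is_path_def H_def by auto
  qed
  have HG: "is_path ?G vs es" if "is_path H vs es" "e \<notin> set es" for vs es
  proof -
    have "\<And>i. i < length es \<Longrightarrow> es ! i \<noteq> e" using that(2) nth_mem by metis
    then have "is_path T vs es" using that(1) unfolding is_path_def H_def by auto
    then show ?thesis using path_del_edge that(2) by blast
  qed
  have pTG: "is_path T vs es" if "is_path ?G vs es" for vs es using path_del_edge2[OF that] by blast
  have Q: "is_path H (vs1 @ vs2) (es1 @ e # es2)"
    by (rule path_concat[OF GH[OF ip1(1)] GH[OF ip2(1)] dv]) (use e ip1 ip2 in \<open>auto simp: H_def\<close>)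
  have hdQ: "hd (vs1 @ vs2) = x1" and lastQ: "last (vs1 @ vs2) = y2"
    using ip1 ip2 unfolding is_path_def by auto
  have uniq: "vs' = vs1 @ vs2 \<and> es' = es1 @ e # es2" if R: "path_between H x1 y2 vs' es'" for vs' es'
  proof -
    have iR: "is_path H vs' es'" "hd vs' = x1" "last vs' = y2" using R unfolding path_between_def by auto
    show ?thesis
    proof (cases "e \<in> set es'")
      case False
      then have "is_path ?G vs' es'" using HG iR(1) by blast
      then have "reach ?G x1 y2" using path_reach_last iR by metis
      then have "y2 \<in> C1" using comp_cl xa(1) unfolding C1_def by blast
      then show ?thesis using yb(2) disj by blast
    next
      case True
      then obtain i where i: "i < length es'" "es'!i = e" by (auto simp: in_set_conv_nth)
      note S = path_split[OF iR(1) i(1)]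
      let ?A = "take (Suc i) vs'" and ?Ae = "take i es'" and ?B = "drop (Suc i) vs'" and ?Be = "drop (Suc i) es'"
      have pA: "is_path ?G ?A ?Ae" using HG S i(2) by metis
      have pB: "is_path ?G ?B ?Be" using HG S i(2) by metis
      have ee: "ends H e = {vs'!i, vs'!Suc i}" using iR(1) i unfolding is_path_def by metis
      then have ab2: "{vs'!i, vs'!Suc i} = {a', b'}" unfolding H_def by simp
      have "reach ?G x1 (vs'!i)" using path_reach_last[OF pA] S iR(2) by metis
      then have "vs'!i \<in> C1" using comp_cl xa(1) unfolding C1_def by blast
      then have "vs'!i \<noteq> b'" using yb(1) disj by blast
      then have vi: "vs'!i = a'" "vs'!Suc i = b'" using ab2 by (auto simp: doubleton_eq_iff)
      have eqA: "vs1 = ?A \<and> es1 = ?Ae"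
        using path_unique[OF wf bp pTG[OF ip1(1)] pTG[OF pA]] ip1 S iR vi by metis
      have eqB: "vs2 = ?B \<and> es2 = ?Be"
        using path_unique[OF wf bp pTG[OF ip2(1)] pTG[OF pB]] ip2 S iR vi by metis
      have "vs' = ?A @ ?B" by simp
      moreover have "es' = ?Ae @ e # ?Be" using i id_take_nth_drop by metis
      ultimately show ?thesis using eqA eqB by simp
    qed
  qed
  have usQ: "unique_shortest_path H (vs1 @ vs2) (es1 @ e # es2)"
    unfolding unique_shortest_path_def hdQ lastQ
  proof (intro conjI allI impI)
    show "is_path H (vs1 @ vs2) (es1 @ e # es2)" by (rule Q)
  next
    fix vs' es' assume "path_between H x1 y2 vs' es'"
    then show "length (vs1 @ vs2) \<le> length vs'" using uniq by simp
  next
    fix vs' es' assume "path_between H x1 y2 vs' es' \<and> length vs' = length (vs1 @ vs2)"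
    then show "vs' = vs1 @ vs2" using uniq by blast
  next
    fix vs' es' assume "path_between H x1 y2 vs' es' \<and> length vs' = length (vs1 @ vs2)"
    then show "es' = es1 @ e # es2" using uniq by blast
  qed
  have finH: "finite (verts H)" using fin unfolding H_def by simp
  have "length (vs1 @ vs2) \<le> usp H" using usp_ge[OF finH usQ] .
  moreover have "length (vs1 @ vs2) = length es1 + length es2 + 2"
    using ip1(1) ip2(1) unfolding is_path_def by simp
  moreover have "usp H \<le> card (verts T)" using usp_le_card[OF finH] unfolding H_def by simp
  ultimately have uH: "diameter T + 2 \<le> usp H" "usp H \<le> card (verts T)" using l1 l2 Dd by auto
  have spH: "sp H = card (verts T) - usp H" unfolding sp_def H_def by simp
  have iso: "graph_iso ?G (del_edge H e)" unfolding graph_iso_def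
    by (intro exI[of _ id]) (auto simp: H_def bij_betw_id)
  have "elem_minor (del_edge H e) H" unfolding elem_minor_def using e unfolding H_def by auto
  then have "is_minor ?G H" unfolding is_minor_def using iso by blast
  then have "spfloor ?G \<le> sp H" using spfloor_le wfH by blast
  then show ?thesis using uH spH by simp
qed


lemma tree_facts:
  assumes t: "is_tree T"
  shows "wf_graph T" "verts T \<noteq> {}" "BP T" "finite (verts T)"
    "\<forall>a\<in>verts T. \<forall>b\<in>verts T. reach T a b"
proof -
  show wf: "wf_graph T" and ne: "verts T \<noteq> {}" using t unfolding is_tree_def by auto
  show "BP T" using tree_BP wf t unfolding is_tree_def by blast
  show "finite (verts T)" using wf unfolding wf_graph_def by blast
  show "\<forall>a\<in>verts T. \<forall>b\<in>verts T. reach T a b"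
  proof (intro ballI)
    fix a b assume "a \<in> verts T" "b \<in> verts T"
    then obtain vs es where "path_between T a b vs es" using t unfolding is_tree_def connected_graph_def by blast
    then show "reach T a b" using path_reach_last unfolding path_between_def by metis
  qed
qed

lemma contract_facts:
  assumes wf: "wf_graph T" and bp: "BP T" and conn: "\<forall>a\<in>verts T. \<forall>b\<in>verts T. reach T a b"
    and e: "e \<in> edges T"
  shows "wf_graph (contract T e)" "BP (contract T e)" "verts (contract T e) \<noteq> {}"
    "\<forall>a\<in>verts (contract T e). \<forall>b\<in>verts (contract T e). reach (contract T e) a b"
    "card (verts (contract T e)) + 1 = card (verts T)"
    "elem_minor (contract T e) T"
proof -
  have np: "\<forall>e'\<in>edges T. e' \<noteq> e \<longrightarrow> ends T e' \<noteq> ends T e" using BP_noparallel[OF wf bp e] by blast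
  show "wf_graph (contract T e)" using wf_contract[OF wf e np] .
  show "BP (contract T e)" using BP_contract[OF wf bp e] .
  have U: "cu T e \<noteq> cw T e" "cu T e \<in> verts T" "cw T e \<in> verts T" using ends_uw[OF wf e] by auto
  show "verts (contract T e) \<noteq> {}" using U by auto
  show "\<forall>a\<in>verts (contract T e). \<forall>b\<in>verts (contract T e). reach (contract T e) a b"
  proof (intro ballI)
    fix a b assume a: "a \<in> verts (contract T e)" and b: "b \<in> verts (contract T e)"
    then have "sig T e a = a" "sig T e b = b" unfolding sig_def by auto
    moreover have "reach T a b" using a b conn by auto
    ultimately show "reach (contract T e) a b" using contract_reach_down[OF wf e] by metis
  qed
  have fin: "finite (verts T)" using wf unfolding wf_graph_def by blast
  show "card (verts (contract T e)) + 1 = card (verts T)"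
  proof -
    have "card (verts T - {cw T e}) = card (verts T) - 1" using U fin by (simp add: card_Diff_singleton)
    moreover have "0 < card (verts T)" using U fin card_gt_0_iff by blast
    ultimately show ?thesis by simp
  qed
  show "elem_minor (contract T e) T" unfolding elem_minor_def using e np by blast
qed

theorem theorem4p3:
  assumes "is_tree T"
  shows "(\<exists>H. elem_minor H T \<and> verts H \<noteq> {} \<and> spfloor H = spfloor T) \<longleftrightarrow>
         (\<exists>e\<in>edges T. diameter (contract T e) < diameter T)"
proof -
  note TF = tree_facts[OF assms]
  have wf: "wf_graph T" and ne: "verts T \<noteq> {}" and bp: "BP T" and fin: "finite (verts T)"
    and conn: "\<forall>a\<in>verts T. \<forall>b\<in>verts T. reach T a b" using TF by auto
  let ?N = "card (verts T)" and ?D = "diameter T"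
  have lbT: "?N \<le> spfloor T + ?D + 1" using LB[OF wf ne conn] .
  have uspT: "?D + 1 \<le> usp T" using USPdiam[OF wf bp ne conn] .
  have uspN: "usp T \<le> ?N" using usp_le_card[OF fin] .
  have spT: "spfloor T \<le> sp T" using spfloor_le[OF wf is_minor_chain[of T T]] by simp
  have sfT: "spfloor T + ?D + 1 = ?N" using lbT uspT uspN spT unfolding sp_def by simp
  show ?thesis
  proof
    assume "\<exists>e\<in>edges T. diameter (contract T e) < ?D"
    then obtain e where e: "e \<in> edges T" and dl: "diameter (contract T e) < ?D" by blast
    let ?C = "contract T e"
    note CF = contract_facts[OF wf bp conn e]
    have lbC: "card (verts ?C) \<le> spfloor ?C + diameter ?C + 1" using LB[OF CF(1) CF(3) CF(4)] .
    have "is_minor ?C T" using is_minor_chain CF(6) by blast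
    then have "spfloor ?C \<le> sp T" using spfloor_le[OF wf] by blast
    then have "spfloor ?C = spfloor T" using lbC CF(5) dl sfT uspT uspN unfolding sp_def by simp
    then show "\<exists>H. elem_minor H T \<and> verts H \<noteq> {} \<and> spfloor H = spfloor T" using CF(6) CF(3) by blast
  next
    assume "\<exists>H. elem_minor H T \<and> verts H \<noteq> {} \<and> spfloor H = spfloor T"
    then obtain H where H: "elem_minor H T" "verts H \<noteq> {}" "spfloor H = spfloor T" by blast
    show "\<exists>e\<in>edges T. diameter (contract T e) < ?D"
    proof (rule ccontr)
      assume "\<not> (\<exists>e\<in>edges T. diameter (contract T e) < ?D)"
      then have big: "\<And>e. e \<in> edges T \<Longrightarrow> ?D \<le> diameter (contract T e)" by (meson not_less)
      from H(1) show False unfolding elem_minor_def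
      proof (elim disjE bexE conjE)
        fix v assume v: "v \<in> verts T" and iso: "\<forall>e\<in>edges T. v \<notin> ends T e" and Hv: "H = del_vertex T v"
        obtain x where x: "x \<in> verts H" using H(2) by blast
        then have xv: "x \<in> verts T" "x \<noteq> v" using Hv unfolding del_vertex_def by auto
        have "reach T x v" using conn xv v by blast
        then show False
        proof (cases rule: rtranclp.cases)
          case rtrancl_refl then show False using xv by simp
        next
          case (rtrancl_into_rtrancl z)
          then show False using iso unfolding adj_def by auto
        qed
      next
        fix e assume e: "e \<in> edges T" and He: "H = del_edge T e"
        have "spfloor H + ?D + 2 \<le> ?N" using del_edge_case[OF wf bp conn e big[OF e]] He by simp
        then show False using H(3) sfT by simp
      next
        fix e assume e: "e \<in> edges T" and np: "\<forall>e'\<in>edges T. e' \<noteq> e \<longrightarrow> ends T e' \<noteq> ends T e"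
          and He: "H = contract T e"
        let ?C = "contract T e"
        note CF = contract_facts[OF wf bp conn e]
        have finC: "finite (verts ?C)" using CF(1) unfolding wf_graph_def by blast
        have u1: "diameter ?C + 1 \<le> usp ?C" using USPdiam[OF CF(1) CF(2) CF(3) CF(4)] .
        have u2: "usp ?C \<le> card (verts ?C)" using usp_le_card[OF finC] .
        have "spfloor ?C \<le> sp ?C" using spfloor_le[OF CF(1) is_minor_chain[of ?C ?C]] by simp
        then show False using H(3) He u1 u2 big[OF e] CF(5) sfT unfolding sp_def by simp
      qed
    qed
  qed
qed

end
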